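(* Let $n\ge2$ and $0\le k\le n-1$. The following sets are equinumerous: (1) the set of ASM-recurrent configurations $c$ on $F_n$ with $\mathrm{level}(c)=k$; (2) the set of subgraphs $(V,E)$ of $P_n$ with $n\in V$ and $|E|=k$; (3) the set of Kimberling paths ending at $(n-k,k)$. In particular, if $T_{F_n}$ is the Tutte polynomial of $F_n$, then $$T_{F_n}(1,x)=\sum_{k=0}^{n-1}\big|\mathrm{Kimb}(n-k,k)\big|\,x^k,\qquad\text{where }\big|\mathrm{Kimb}(n-k,k)\big|=\sum_{r=0}^{n-k-1}\binom{n-k-1}{r}\binom{r+k}{r}.$$
   Context: $P_n$: path on $[n]$ with edges $\{i,i+1\}$; $F_n$: $P_n$ plus sink $0$ adjacent to all of $[n]$. A subgraph of $P_n$ is $(V,E)$ with $V\subseteq[n]$ non-empty and $E$ a set of edges of $P_n$ with both endpoints in $V$. Sandpile setting: configurations $c\in\mathbb{Z}_{\ge0}^n$, stable iff $c_i<\deg(i)$ (on $F_n$: $\{0,1,2\}^n$ with $c_1,c_n\le1$); ASM: unstable vertex loses $\deg(i)$ grains, one to each neighbour (grains to sink vanish); Markov chain adds a grain at a random vertex (fully supported distribution) and stabilises; ASM-recurrent = recurrent state. $\mathrm{level}(c)=\sum_ic_i+\deg(0)-|E(F_n)|=\sum_i c_i-(n-1)$. A Kimberling path is a lattice path from $(0,0)$ with steps $(a,b)$, $a\ge1$, $b\ge0$ integers (any length); $\mathrm{Kimb}(i,j)$ is the set of such paths ending at $(i,j)$. $T_G(x,y)$ is the standard Tutte polynomial. 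*)

theory Defs
  imports Complex_Main
begin

text \<open>Edges are two-element sets of vertices. P_n has vertices 1..n; F_n additionally
  has the sink 0 adjacent to every vertex of [n].\<close>

definition Pn_edges :: "nat \<Rightarrow> nat set set" where
  "Pn_edges n = {{i, i + 1} | i. 1 \<le> i \<and> i < n}"

definition Fn_edges :: "nat \<Rightarrow> nat set set" where
  "Fn_edges n = Pn_edges n \<union> {{0, i} | i. 1 \<le> i \<and> i \<le> n}"

definition Fn_vertices :: "nat \<Rightarrow> nat set" where
  "Fn_vertices n = {0..n}"

definition Fn_deg :: "nat \<Rightarrow> nat \<Rightarrow> nat" where
  "Fn_deg n v = card {e \<in> Fn_edges n. v \<in> e}"

definition configs :: "nat \<Rightarrow> (nat \<Rightarrow> nat) set" where
  "configs n = {c. \<forall>i. i \<notin> {1..n} \<longrightarrow> c i = 0}"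

definition stable :: "nat \<Rightarrow> (nat \<Rightarrow> nat) \<Rightarrow> bool" where
  "stable n c \<longleftrightarrow> c \<in> configs n \<and> (\<forall>i\<in>{1..n}. c i < Fn_deg n i)"

text \<open>Toppling of an unstable vertex i: it loses deg(i) grains, one to each neighbour;
  grains sent to the sink vanish.\<close>

definition topple :: "nat \<Rightarrow> nat \<Rightarrow> (nat \<Rightarrow> nat) \<Rightarrow> (nat \<Rightarrow> nat)" where
  "topple n i c = (\<lambda>j. if j = i then c j - Fn_deg n i
                       else if j \<noteq> 0 \<and> {i, j} \<in> Fn_edges n then c j + 1
                       else c j)"

definition topple_step :: "nat \<Rightarrow> (nat \<Rightarrow> nat) \<Rightarrow> (nat \<Rightarrow> nat) \<Rightarrow> bool" where
  "topple_step n c d \<longleftrightarrow> (\<exists>i\<in>{1..n}. Fn_deg n i \<le> c i \<and> d = topple n i c)"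

definition stabilises_to :: "nat \<Rightarrow> (nat \<Rightarrow> nat) \<Rightarrow> (nat \<Rightarrow> nat) \<Rightarrow> bool" where
  "stabilises_to n c d \<longleftrightarrow> (topple_step n)\<^sup>*\<^sup>* c d \<and> stable n d"

text \<open>One-step transition relation of the sandpile Markov chain (positive probability):
  add a grain at some vertex of [n] (fully supported distribution) and stabilise.\<close>

definition chain_step :: "nat \<Rightarrow> (nat \<Rightarrow> nat) \<Rightarrow> (nat \<Rightarrow> nat) \<Rightarrow> bool" where
  "chain_step n c d \<longleftrightarrow> stable n c \<and>
     (\<exists>i\<in>{1..n}. stabilises_to n (c(i := c i + 1)) d)"

text \<open>Recurrent state of the finite Markov chain: a stable configuration c such that
  every state reachable from c can reach c back (c lies in a closed communicating class).\<close>

definition ASM_recurrent :: "nat \<Rightarrow> (nat \<Rightarrow> nat) \<Rightarrow> bool" where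
  "ASM_recurrent n c \<longleftrightarrow> stable n c \<and>
     (\<forall>d. (chain_step n)\<^sup>*\<^sup>* c d \<longrightarrow> (chain_step n)\<^sup>*\<^sup>* d c)"

definition level :: "nat \<Rightarrow> (nat \<Rightarrow> nat) \<Rightarrow> int" where
  "level n c = int (\<Sum>i=1..n. c i) + int (Fn_deg n 0) - int (card (Fn_edges n))"

definition subgraphs_Pn :: "nat \<Rightarrow> (nat set \<times> nat set set) set" where
  "subgraphs_Pn n = {(V, E). V \<subseteq> {1..n} \<and> V \<noteq> {} \<and> E \<subseteq> Pn_edges n \<and>
                            (\<forall>e\<in>E. e \<subseteq> V)}"

text \<open>A lattice path from (0,0) is represented by its list of steps (a,b) with a \<ge> 1,
  b \<ge> 0 (b \<ge> 0 automatic for nat); it ends at the sum of its steps.\<close>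

definition Kimb :: "nat \<Rightarrow> nat \<Rightarrow> (nat \<times> nat) list set" where
  "Kimb i j = {ps. (\<forall>s\<in>set ps. 1 \<le> fst s) \<and>
                   sum_list (map fst ps) = i \<and> sum_list (map snd ps) = j}"

definition ncomp :: "nat set \<Rightarrow> nat set set \<Rightarrow> nat" where
  "ncomp V A = card (V // {(u, v). u \<in> V \<and> v \<in> V \<and>
                        (u, v) \<in> ({(x, y). {x, y} \<in> A})\<^sup>*})"

definition graph_rank :: "nat set \<Rightarrow> nat set set \<Rightarrow> nat" where
  "graph_rank V A = card V - ncomp V A"

definition tutte :: "nat set \<Rightarrow> nat set set \<Rightarrow> real \<Rightarrow> real \<Rightarrow> real" where
  "tutte V E x y = (\<Sum>A\<in>Pow E. (x - 1) ^ (graph_rank V E - graph_rank V A) *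
                                 (y - 1) ^ (card A - graph_rank V A))"

end

theory Submission
  imports Defs
begin


section \<open>Canonical sequence\<close>

fun XY :: "real \<Rightarrow> nat \<Rightarrow> real \<times> real" where
  "XY y 0 = (0, 1)"
| "XY y (Suc n) = ((1 + y) * fst (XY y n) + snd (XY y n), fst (XY y n) + snd (XY y n))"

definition XX :: "real \<Rightarrow> nat \<Rightarrow> real" where "XX y n = fst (XY y n)"
definition YY :: "real \<Rightarrow> nat \<Rightarrow> real" where "YY y n = snd (XY y n)"

lemma XX_0[simp]: "XX y 0 = 0" and YY_0[simp]: "YY y 0 = 1"
  by (simp_all add: XX_def YY_def)
lemma XX_Suc: "XX y (Suc n) = (1 + y) * XX y n + YY y n"
  and YY_Suc: "YY y (Suc n) = XX y n + YY y n"
  by (simp_all add: XX_def YY_def)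

section \<open>Kimberling paths: cardinality\<close>

lemma sum_list_map_pred:
  "(\<forall>a\<in>set as. 1 \<le> (a::nat)) \<Longrightarrow> sum_list (map (\<lambda>a. a - 1) as) = sum_list as - length as"
proof (induction as)
  case Nil then show ?case by simp
next
  case (Cons a as)
  have "length as \<le> sum_list as"
    using Cons.prems by (induction as) auto
  with Cons show ?case by auto
qed

lemma sum_list_map_Suc: "sum_list (map Suc l) = sum_list l + length l"
  by (induction l) auto

lemma length_le_sum_list_pos: "(\<forall>a\<in>set as. 1 \<le> (a::nat)) \<Longrightarrow> length as \<le> sum_list as"
  by (induction as) auto

lemma finite_lists_sum: "finite {l::nat list. length l = m \<and> sum_list l = N}"
proof -
  have "{l::nat list. length l = m \<and> sum_list l = N} \<subseteq> {l. set l \<subseteq> {0..N} \<and> length l = m}"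
    by (auto simp: member_le_sum_list)
  moreover have "finite {l. set l \<subseteq> {0..N} \<and> length l = m}"
    by (rule finite_lists_length_eq) simp
  ultimately show ?thesis by (rule finite_subset)
qed

lemma card_pos_lists:
  assumes "1 \<le> m" "m \<le> i"
  shows "card {as::nat list. length as = m \<and> (\<forall>a\<in>set as. 1 \<le> a) \<and> sum_list as = i}
         = (i - 1) choose (m - 1)"
proof -
  let ?A = "{as::nat list. length as = m \<and> (\<forall>a\<in>set as. 1 \<le> a) \<and> sum_list as = i}"
  let ?B = "{l::nat list. length l = m \<and> sum_list l = i - m}"
  have "bij_betw (map (\<lambda>a. a - 1)) ?A ?B"
  proof (rule bij_betw_byWitness[where f' = "map Suc"])
    show "\<forall>a\<in>?A. map Suc (map (\<lambda>a. a - 1) a) = a"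
      by (auto intro!: map_idI)
    show "\<forall>a\<in>?B. map (\<lambda>a. a - 1) (map Suc a) = a" by (simp add: map_idI)
    show "map (\<lambda>a. a - 1) ` ?A \<subseteq> ?B" by (force simp: sum_list_map_pred[unfolded One_nat_def])
    show "map Suc ` ?B \<subseteq> ?A" using assms by (auto simp: sum_list_map_Suc)
  qed
  then have "card ?A = card ?B" by (rule bij_betw_same_card)
  also have "\<dots> = (i - m + m - 1) choose (i - m)" by (rule card_length_sum_list)
  also have "\<dots> = (i - 1) choose (m - 1)"
    using assms binomial_symmetric[of "m-1" "i-1"] by (simp add: Suc_diff_le)
  finally show ?thesis .
qed

lemma Kimb_zip:
  "Kimb i j = (\<lambda>(as,bs). zip as bs) ` {(as,bs). length as = length bs \<and> (\<forall>a\<in>set as. 1 \<le> a)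
                 \<and> sum_list as = i \<and> sum_list bs = j}"
proof
  show "Kimb i j \<subseteq> (\<lambda>(as,bs). zip as bs) ` {(as,bs). length as = length bs \<and> (\<forall>a\<in>set as. 1 \<le> a)
                 \<and> sum_list as = i \<and> sum_list bs = j}"
  proof
    fix ps assume "ps \<in> Kimb i j"
    then show "ps \<in> (\<lambda>(as,bs). zip as bs) ` {(as,bs). length as = length bs \<and> (\<forall>a\<in>set as. 1 \<le> a)
                 \<and> sum_list as = i \<and> sum_list bs = j}"
      unfolding Kimb_def
      by (intro image_eqI[where x = "(map fst ps, map snd ps)"]) (auto simp: zip_map_fst_snd)
  qed
next
  show "(\<lambda>(as,bs). zip as bs) ` {(as,bs). length as = length bs \<and> (\<forall>a\<in>set as. 1 \<le> a)
                 \<and> sum_list as = i \<and> sum_list bs = j} \<subseteq> Kimb i j"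
    by (auto simp: Kimb_def set_zip)
qed

lemma Kimb_zip_inj:
  "inj_on (\<lambda>(as,bs). zip as bs) {(as,bs). length as = length (bs::nat list) \<and> (\<forall>a\<in>set as. 1 \<le> (a::nat))
                 \<and> sum_list as = i \<and> sum_list bs = j}"
proof (rule inj_onI, clarsimp)
  fix as bs as' bs' :: "nat list"
  assume h: "length as = length bs" "length as' = length bs'" "zip as bs = zip as' bs'"
  then have "map fst (zip as bs) = map fst (zip as' bs')" "map snd (zip as bs) = map snd (zip as' bs')"
    by simp_all
  with h show "as = as' \<and> bs = bs'" by (metis map_fst_zip map_snd_zip)
qed

lemma card_Kimb:
  assumes "1 \<le> i"
  shows "card (Kimb i j) = (\<Sum>r=0..i-1. ((i - 1) choose r) * ((r + j) choose r))"
proof -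
  let ?P = "{(as,bs). length as = length bs \<and> (\<forall>a\<in>set as. 1 \<le> a)
                 \<and> sum_list as = i \<and> sum_list (bs::nat list) = j}"
  let ?PA = "\<lambda>m. {as::nat list. length as = m \<and> (\<forall>a\<in>set as. 1 \<le> a) \<and> sum_list as = i}"
  let ?PB = "\<lambda>m. {bs::nat list. length bs = m \<and> sum_list bs = j}"
  have finA: "finite (?PA m)" for m
    by (rule finite_subset[OF _ finite_lists_sum[of m i]]) auto
  have P_eq: "?P = (\<Union>m\<in>{1..i}. ?PA m \<times> ?PB m)"
  proof (intro equalityI subsetI)
    fix x assume "x \<in> ?P"
    then obtain as bs where x: "x = (as, bs)" and h: "length as = length bs" "\<forall>a\<in>set as. 1 \<le> a" "sum_list as = i" "sum_list bs = j" by auto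
    have "length as \<le> i" using length_le_sum_list_pos[OF h(2)] h(3) by simp
    moreover have "length as \<noteq> 0" using h(3) assms by auto
    ultimately show "x \<in> (\<Union>m\<in>{1..i}. ?PA m \<times> ?PB m)" using h x by (auto simp: Suc_le_eq)
  qed auto
  have "card (Kimb i j) = card ?P"
    unfolding Kimb_zip by (rule card_image[OF Kimb_zip_inj])
  also have "\<dots> = (\<Sum>m\<in>{1..i}. card (?PA m \<times> ?PB m))"
    unfolding P_eq
    by (rule card_UN_disjoint) (auto intro!: finite_cartesian_product finA[unfolded One_nat_def] finite_lists_sum)
  also have "\<dots> = (\<Sum>m\<in>{1..i}. ((i - 1) choose (m - 1)) * ((j + m - 1) choose j))"
    by (rule sum.cong) (auto simp: card_cartesian_product card_pos_lists[unfolded One_nat_def] card_length_sum_list)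
  also have "\<dots> = (\<Sum>r=0..i-1. ((i - 1) choose r) * ((r + j) choose r))"
  proof -
    have "(\<Sum>m\<in>{1..i}. ((i - 1) choose (m - 1)) * ((j + m - 1) choose j))
        = (\<Sum>r\<in>{0..i-1}. ((i - 1) choose r) * ((j + r) choose j))"
      using assms
      by (intro sum.reindex_bij_witness[where i = Suc and j = "\<lambda>m. m - 1"]) auto
    also have "\<dots> = (\<Sum>r=0..i-1. ((i - 1) choose r) * ((r + j) choose r))"
      by (rule sum.cong) (auto simp: binomial_symmetric[of j "x + j" for x] add.commute)
    finally show ?thesis .
  qed
  finally show ?thesis .
qed

section \<open>Kimberling generating function\<close>

definition KP :: "nat \<Rightarrow> (nat \<times> nat) list set" where
  "KP n = {ps. (\<forall>s\<in>set ps. 1 \<le> fst s) \<and> sum_list (map fst ps) + sum_list (map snd ps) = n}"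

definition KA :: "nat \<Rightarrow> (nat \<times> nat) list set" where
  "KA n = {ps \<in> KP n. ps \<noteq> [] \<and> fst (hd ps) = 1}"

definition kap :: "real \<Rightarrow> nat \<Rightarrow> real" where
  "kap y n = (\<Sum>ps\<in>KP n. y ^ sum_list (map snd ps))"

definition alp :: "real \<Rightarrow> nat \<Rightarrow> real" where
  "alp y n = (\<Sum>ps\<in>KA n. y ^ sum_list (map snd ps))"

lemma length_le_fst: "(\<forall>s\<in>set ps. 1 \<le> fst s) \<Longrightarrow> length ps \<le> sum_list (map fst (ps::(nat\<times>nat) list))"
  by (induction ps) auto

lemma finite_KP: "finite (KP n)"
proof -
  have "KP n \<subseteq> {ps. set ps \<subseteq> {0..n} \<times> {0..n} \<and> length ps \<le> n}"
  proof
    fix ps assume "ps \<in> KP n"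
    then have h: "\<forall>s\<in>set ps. 1 \<le> fst s" "sum_list (map fst ps) + sum_list (map snd ps) = n"
      by (auto simp: KP_def)
    have "length ps \<le> n" using length_le_fst[OF h(1)] h(2) by simp
    moreover have "set ps \<subseteq> {0..n} \<times> {0..n}"
    proof
      fix s assume s: "s \<in> set ps"
      have "fst s \<le> sum_list (map fst ps)" using s by (simp add: member_le_sum_list)
      moreover have "snd s \<le> sum_list (map snd ps)" using s by (simp add: member_le_sum_list)
      ultimately show "s \<in> {0..n} \<times> {0..n}" using h(2) by (cases s) auto
    qed
    ultimately show "ps \<in> {ps. set ps \<subseteq> {0..n} \<times> {0..n} \<and> length ps \<le> n}" by simp
  qed
  moreover have "finite {ps. set ps \<subseteq> {0..n} \<times> {0..n} \<and> length ps \<le> n}"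
    by (rule finite_lists_length_le) simp
  ultimately show ?thesis by (rule finite_subset)
qed

lemma finite_KA: "finite (KA n)"
  by (rule finite_subset[OF _ finite_KP]) (auto simp: KA_def)

lemma KP_nonempty: "ps \<in> KP (Suc n) \<Longrightarrow> ps \<noteq> []"
  by (auto simp: KP_def)

lemma KP_ne: "ps \<in> KP n \<Longrightarrow> 1 \<le> n \<Longrightarrow> ps \<noteq> []"
  by (auto simp: KP_def)

lemma KP_Suc_split:
  "KP (Suc n) = {ps \<in> KP (Suc n). 2 \<le> fst (hd ps)} \<union> {ps \<in> KP (Suc n). fst (hd ps) = 1 \<and> 1 \<le> snd (hd ps)}
     \<union> {ps \<in> KP (Suc n). hd ps = (1, 0)}"
proof -
  have h: "ps \<in> KP (Suc n) \<Longrightarrow> 1 \<le> fst (hd ps)" for ps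
    by (cases ps) (auto simp: KP_def)
  show ?thesis
  proof (intro equalityI subsetI)
    fix ps assume p: "ps \<in> KP (Suc n)"
    with h[OF p] show "ps \<in> {ps \<in> KP (Suc n). 2 \<le> fst (hd ps)} \<union> {ps \<in> KP (Suc n). fst (hd ps) = 1 \<and> 1 \<le> snd (hd ps)}
     \<union> {ps \<in> KP (Suc n). hd ps = (1, 0)}"
      by (cases "hd ps") auto
  qed auto
qed

lemma hd_tl_eq: "xs \<noteq> [] \<Longrightarrow> hd xs = x \<Longrightarrow> x # tl xs = xs"
  by auto

lemma KP_cons: "ps \<in> KP n \<Longrightarrow> 1 \<le> n \<Longrightarrow> \<exists>a b r. ps = (a,b) # r"
  by (cases ps) (auto simp: KP_def)

lemma bij1: assumes "1 \<le> n"
  shows "bij_betw (\<lambda>ps. (fst (hd ps) + 1, snd (hd ps)) # tl ps) (KP n) {ps \<in> KP (Suc n). 2 \<le> fst (hd ps)}"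
  apply (rule bij_betw_byWitness[where f' = "\<lambda>ps. (fst (hd ps) - 1, snd (hd ps)) # tl ps"])
  subgoal using KP_ne[OF _ assms] by auto
  subgoal using KP_ne[of _ "Suc n"] by auto
  subgoal
  proof (rule image_subsetI)
    fix ps assume ps: "ps \<in> KP n"
    then obtain a b r where "ps = (a,b) # r" using KP_cons[OF ps assms] by blast
    with ps show "(fst (hd ps) + 1, snd (hd ps)) # tl ps \<in> {ps \<in> KP (Suc n). 2 \<le> fst (hd ps)}"
      by (auto simp: KP_def)
  qed
  subgoal
  proof (rule image_subsetI)
    fix ps assume ps: "ps \<in> {ps \<in> KP (Suc n). 2 \<le> fst (hd ps)}"
    then obtain a b r where "ps = (a,b) # r" using KP_cons[of ps "Suc n"] by auto
    with ps show "(fst (hd ps) - 1, snd (hd ps)) # tl ps \<in> KP n"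
      by (auto simp: KP_def)
  qed
  done

lemma bij2:
  shows "bij_betw (\<lambda>ps. (1, snd (hd ps) + 1) # tl ps) (KA n) {ps \<in> KP (Suc n). fst (hd ps) = 1 \<and> 1 \<le> snd (hd ps)}"
  apply (rule bij_betw_byWitness[where f' = "\<lambda>ps. (1, snd (hd ps) - 1) # tl ps"])
  subgoal by (auto simp: KA_def neq_Nil_conv)
  subgoal using KP_ne[of _ "Suc n"] by (auto intro!: hd_tl_eq simp: prod_eq_iff)
  subgoal
  proof (rule image_subsetI)
    fix ps assume ps: "ps \<in> KA n"
    then obtain a b r where "ps = (a,b) # r" by (auto simp: KA_def neq_Nil_conv)
    with ps show "(1, snd (hd ps) + 1) # tl ps \<in> {ps \<in> KP (Suc n). fst (hd ps) = 1 \<and> 1 \<le> snd (hd ps)}"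
      by (auto simp: KA_def KP_def)
  qed
  subgoal
  proof (rule image_subsetI)
    fix ps assume ps: "ps \<in> {ps \<in> KP (Suc n). fst (hd ps) = 1 \<and> 1 \<le> snd (hd ps)}"
    then obtain a b r where "ps = (a,b) # r" using KP_cons[of ps "Suc n"] by auto
    with ps show "(1, snd (hd ps) - 1) # tl ps \<in> KA n"
      by (auto simp: KA_def KP_def)
  qed
  done

lemma bij3:
  shows "bij_betw (\<lambda>ps. (1, 0) # ps) (KP n) {ps \<in> KP (Suc n). hd ps = (1, 0)}"
  apply (rule bij_betw_byWitness[where f' = tl])
  subgoal by simp
  subgoal using KP_ne[of _ "Suc n"] by (auto intro!: hd_tl_eq)
  subgoal by (auto simp: KP_def)
  subgoal
  proof (rule image_subsetI)
    fix ps assume ps: "ps \<in> {ps \<in> KP (Suc n). hd ps = (1, 0)}"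
    then obtain a b r where "ps = (a,b) # r" using KP_cons[of ps "Suc n"] by auto
    with ps show "tl ps \<in> KP n"
      by (auto simp: KP_def)
  qed
  done

lemma KA_Suc_split:
  "KA (Suc n) = {ps \<in> KP (Suc n). fst (hd ps) = 1 \<and> 1 \<le> snd (hd ps)} \<union> {ps \<in> KP (Suc n). hd ps = (1, 0)}"
  using KP_ne[of _ "Suc n"] by (auto simp: KA_def prod_eq_iff)

lemma kap_Suc: assumes "1 \<le> n" shows "kap y (Suc n) = 2 * kap y n + y * alp y n"
proof -
  let ?w = "\<lambda>ps. y ^ sum_list (map snd (ps::(nat\<times>nat) list))"
  let ?S1 = "{ps \<in> KP (Suc n). 2 \<le> fst (hd ps)}"
  let ?S2 = "{ps \<in> KP (Suc n). fst (hd ps) = 1 \<and> 1 \<le> snd (hd ps)}"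
  let ?S3 = "{ps \<in> KP (Suc n). hd ps = (1, 0)}"
  have fin: "finite ?S1" "finite ?S2" "finite ?S3" using finite_KP[of "Suc n"] by auto
  have "kap y (Suc n) = sum ?w (?S1 \<union> ?S2 \<union> ?S3)"
    unfolding kap_def by (subst KP_Suc_split) rule
  also have "\<dots> = sum ?w ?S1 + sum ?w ?S2 + sum ?w ?S3"
    using fin by (subst sum.union_disjoint; auto)+
  also have "sum ?w ?S1 = kap y n"
  proof -
    have "sum ?w ?S1 = (\<Sum>ps\<in>KP n. ?w ((fst (hd ps) + 1, snd (hd ps)) # tl ps))"
      by (rule sum.reindex_bij_betw[OF bij1[OF assms], symmetric])
    also have "\<dots> = kap y n" unfolding kap_def
    proof (intro sum.cong refl)
      fix ps assume "ps \<in> KP n"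
      then obtain a b r where "ps = (a,b)#r" using KP_cons[OF _ assms] by blast
      then show "?w ((fst (hd ps) + 1, snd (hd ps)) # tl ps) = ?w ps" by simp
    qed
    finally show ?thesis .
  qed
  also have "sum ?w ?S2 = y * alp y n"
  proof -
    have "sum ?w ?S2 = (\<Sum>ps\<in>KA n. ?w ((1, snd (hd ps) + 1) # tl ps))"
      by (rule sum.reindex_bij_betw[OF bij2, symmetric])
    also have "\<dots> = y * alp y n" unfolding alp_def sum_distrib_left
      by (intro sum.cong refl) (auto simp: KA_def neq_Nil_conv)
    finally show ?thesis .
  qed
  also have "sum ?w ?S3 = kap y n"
  proof -
    have "sum ?w ?S3 = (\<Sum>ps\<in>KP n. ?w ((1, 0) # ps))"
      by (rule sum.reindex_bij_betw[OF bij3, symmetric])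
    also have "\<dots> = kap y n" unfolding kap_def by simp
    finally show ?thesis .
  qed
  finally show ?thesis by simp
qed

lemma alp_Suc: "alp y (Suc n) = kap y n + y * alp y n"
proof -
  let ?w = "\<lambda>ps. y ^ sum_list (map snd (ps::(nat\<times>nat) list))"
  let ?S2 = "{ps \<in> KP (Suc n). fst (hd ps) = 1 \<and> 1 \<le> snd (hd ps)}"
  let ?S3 = "{ps \<in> KP (Suc n). hd ps = (1, 0)}"
  have fin: "finite ?S2" "finite ?S3" using finite_KP[of "Suc n"] by auto
  have "alp y (Suc n) = sum ?w (?S2 \<union> ?S3)"
    unfolding alp_def by (subst KA_Suc_split) rule
  also have "\<dots> = sum ?w ?S2 + sum ?w ?S3"
    using fin by (subst sum.union_disjoint; auto)
  also have "sum ?w ?S2 = y * alp y n"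
  proof -
    have "sum ?w ?S2 = (\<Sum>ps\<in>KA n. ?w ((1, snd (hd ps) + 1) # tl ps))"
      by (rule sum.reindex_bij_betw[OF bij2, symmetric])
    also have "\<dots> = y * alp y n" unfolding alp_def sum_distrib_left
      by (intro sum.cong refl) (auto simp: KA_def neq_Nil_conv)
    finally show ?thesis .
  qed
  also have "sum ?w ?S3 = kap y n"
  proof -
    have "sum ?w ?S3 = (\<Sum>ps\<in>KP n. ?w ((1, 0) # ps))"
      by (rule sum.reindex_bij_betw[OF bij3, symmetric])
    also have "\<dots> = kap y n" unfolding kap_def by simp
    finally show ?thesis .
  qed
  finally show ?thesis by simp
qed

lemma KP_1: "KP (Suc 0) = {[(1,0)]}"
proof -
  have "ps \<in> KP (Suc 0) \<Longrightarrow> ps = [(1,0)]" for ps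
    by (cases ps) (auto simp: KP_def, case_tac list, auto)
  moreover have "[(1,0)] \<in> KP (Suc 0)" by (simp add: KP_def)
  ultimately show ?thesis by blast
qed

lemma kap_1: "kap y (Suc 0) = 1" by (simp add: kap_def KP_1)
lemma KA_1: "KA (Suc 0) = {[(1,0)]}" by (auto simp: KA_def KP_1)
lemma alp_1: "alp y (Suc 0) = 1" by (simp add: alp_def KA_1)

lemma kap_XX_Suc: "kap y (Suc n) = XX y (Suc n) \<and> kap y (Suc n) - y * kap y (Suc n) + y * alp y (Suc n) = YY y (Suc n)"
proof (induction n)
  case 0
  then show ?case by (simp add: kap_1 alp_1 XX_def YY_def)
next
  case (Suc n)
  then have h1: "XX y (Suc n) = kap y (Suc n)" and h2: "YY y (Suc n) = kap y (Suc n) - y * kap y (Suc n) + y * alp y (Suc n)"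
    by auto
  show ?case
    unfolding XX_Suc[of y "Suc n"] YY_Suc[of y "Suc n"] h1 h2 kap_Suc[of "Suc n", simplified] alp_Suc
    by (simp add: algebra_simps)
qed

lemma kap_XX: "1 \<le> n \<Longrightarrow> kap y n = XX y n"
  using kap_XX_Suc[of y "n - 1"] by simp

lemma kap_coeffs:
  assumes "1 \<le> n"
  shows "kap y n = (\<Sum>j\<le>n - 1. real (card (Kimb (n - j) j)) * y ^ j)"
proof -
  let ?g = "\<lambda>ps. sum_list (map snd (ps::(nat\<times>nat) list))"
  have sub: "?g ` KP n \<subseteq> {..n-1}"
  proof (rule image_subsetI)
    fix ps assume ps: "ps \<in> KP n"
    then have "ps \<noteq> []" using assms by (cases ps) (auto simp: KP_def)
    then have "1 \<le> sum_list (map fst ps)" using ps by (cases ps) (auto simp: KP_def)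
    then show "?g ps \<in> {..n-1}" using ps by (auto simp: KP_def)
  qed
  have "kap y n = (\<Sum>j\<le>n-1. \<Sum>ps\<in>{ps \<in> KP n. ?g ps = j}. y ^ ?g ps)"
    unfolding kap_def by (rule sum.group[OF finite_KP _ sub, symmetric]) simp
  also have "\<dots> = (\<Sum>j\<le>n - 1. real (card (Kimb (n - j) j)) * y ^ j)"
  proof (rule sum.cong[OF refl])
    fix j assume j: "j \<in> {..n-1}"
    have "{ps \<in> KP n. ?g ps = j} = Kimb (n - j) j"
      using j assms by (auto simp: KP_def Kimb_def)
    moreover have "(\<Sum>ps\<in>Kimb (n - j) j. y ^ ?g ps) = (\<Sum>ps\<in>Kimb (n - j) j. y ^ j)"
      by (rule sum.cong) (auto simp: Kimb_def)
    ultimately show "(\<Sum>ps\<in>{ps \<in> KP n. ?g ps = j}. y ^ ?g ps) = real (card (Kimb (n - j) j)) * y ^ j"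
      by simp
  qed
  finally show ?thesis .
qed


section \<open>Subgraphs of the path\<close>

definition sg :: "nat \<Rightarrow> (nat set \<times> nat set set) set" where
  "sg n = {(V, E). V \<subseteq> {1..n} \<and> E \<subseteq> Pn_edges n \<and> (\<forall>e\<in>E. e \<subseteq> V)}"

definition GG :: "real \<Rightarrow> nat \<Rightarrow> real" where
  "GG y n = (\<Sum>(V,E)\<in>{(V,E)\<in>sg n. n \<in> V}. y ^ card E)"
definition HH :: "real \<Rightarrow> nat \<Rightarrow> real" where
  "HH y n = (\<Sum>(V,E)\<in>sg n. y ^ card E)"

lemma Pn_edges_img: "Pn_edges n = (\<lambda>i. {i, i+1}) ` {1..<n}"
  by (auto simp: Pn_edges_def)

lemma finite_Pn_edges[simp]: "finite (Pn_edges n)"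
  by (simp add: Pn_edges_img)

lemma card_Pn_edges_le: "card (Pn_edges n) \<le> n - 1"
  unfolding Pn_edges_img using card_image_le[of "{1..<n}" "\<lambda>i. {i, i+1}"] by simp

lemma Pn_edges_sub: "e \<in> Pn_edges n \<Longrightarrow> e \<subseteq> {1..n}"
  by (auto simp: Pn_edges_def)

lemma Pn_edges_Suc: "1 \<le> n \<Longrightarrow> Pn_edges (Suc n) = insert {n, Suc n} (Pn_edges n)"
  by (auto simp: Pn_edges_def less_Suc_eq)

lemma Pn_edges_Suc0: "Pn_edges (Suc 0) = {}"
  by (auto simp: Pn_edges_def)

lemma Pn_edges_mono: "Pn_edges n \<subseteq> Pn_edges (Suc n)"
  by (auto simp: Pn_edges_def)

lemma new_edge_notin: "{n, Suc n} \<notin> Pn_edges n"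
  using Pn_edges_sub by fastforce

lemma finite_sg: "finite (sg n)"
proof -
  have "sg n \<subseteq> Pow {1..n} \<times> Pow (Pn_edges n)" by (auto simp: sg_def)
  then show ?thesis by (rule finite_subset) simp
qed

lemma sg_0: "sg 0 = {({}, {})}"
  by (auto simp: sg_def Pn_edges_def)

lemma Pn_edges_Suc_cases: "e \<in> Pn_edges (Suc n) \<Longrightarrow> e \<in> Pn_edges n \<or> e = {n, Suc n}"
  by (auto simp: Pn_edges_def less_Suc_eq)

lemma sg_part0: "{(V,E)\<in>sg (Suc n). Suc n \<notin> V} = sg n"
proof (intro equalityI subsetI)
  fix x assume "x \<in> {(V,E)\<in>sg (Suc n). Suc n \<notin> V}"
  then obtain V E where x: "x = (V,E)" "V \<subseteq> {1..Suc n}" "E \<subseteq> Pn_edges (Suc n)" "\<forall>e\<in>E. e \<subseteq> V" "Suc n \<notin> V"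
    by (auto simp: sg_def)
  have "E \<subseteq> Pn_edges n"
  proof
    fix e assume "e \<in> E"
    then show "e \<in> Pn_edges n" using x Pn_edges_Suc_cases[of e n] by blast
  qed
  moreover have "V \<subseteq> {1..n}" using x by (auto simp: le_Suc_eq)
  ultimately show "x \<in> sg n" using x by (auto simp: sg_def)
next
  fix x assume "x \<in> sg n"
  then show "x \<in> {(V,E)\<in>sg (Suc n). Suc n \<notin> V}"
    using Pn_edges_mono[of n] by (auto simp: sg_def)
qed

lemma sg_bij1: "bij_betw (\<lambda>(V,E). (insert (Suc n) V, E)) (sg n)
                 {(V,E)\<in>sg (Suc n). Suc n \<in> V \<and> {n, Suc n} \<notin> E}"
  apply (rule bij_betw_byWitness[where f' = "\<lambda>(V,E). (V - {Suc n}, E)"])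
  subgoal by (auto simp: sg_def)
  subgoal by auto
  subgoal using Pn_edges_mono[of n] new_edge_notin[of n] by (auto simp: sg_def)
  subgoal
  proof (rule image_subsetI, clarify)
    fix V E assume h: "(V,E) \<in> sg (Suc n)" "Suc n \<in> V" "{n, Suc n} \<notin> E"
    have E: "E \<subseteq> Pn_edges n"
    proof
      fix e assume "e \<in> E"
      then show "e \<in> Pn_edges n" using h Pn_edges_Suc_cases[of e n] by (auto simp: sg_def)
    qed
    have "\<forall>e\<in>E. e \<subseteq> V - {Suc n}"
      using E h Pn_edges_sub by (fastforce simp: sg_def)
    then show "(V - {Suc n}, E) \<in> sg n" using h E by (auto simp: sg_def le_Suc_eq)
  qed
  done

lemma sg_bij2: "bij_betw (\<lambda>(V,E). (insert (Suc n) V, insert {n, Suc n} E)) {(V,E)\<in>sg n. n \<in> V}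
                 {(V,E)\<in>sg (Suc n). {n, Suc n} \<in> E}"
  apply (rule bij_betw_byWitness[where f' = "\<lambda>(V,E). (V - {Suc n}, E - {{n, Suc n}})"])
  subgoal
  proof
    fix x assume "x \<in> {(V,E)\<in>sg n. n \<in> V}"
    then obtain V E where x: "x = (V,E)" and h: "(V,E) \<in> sg n" by auto
    then have "Suc n \<notin> V" "{n, Suc n} \<notin> E" using new_edge_notin[of n] by (auto simp: sg_def)
    then show "(\<lambda>(V,E). (V - {Suc n}, E - {{n, Suc n}})) ((\<lambda>(V,E). (insert (Suc n) V, insert {n, Suc n} E)) x) = x"
      using x by (simp add: Diff_insert_absorb)
  qed
  subgoal
  proof
    fix x assume "x \<in> {(V,E)\<in>sg (Suc n). {n, Suc n} \<in> E}"
    then obtain V E where x: "x = (V,E)" and h: "(V,E) \<in> sg (Suc n)" "{n, Suc n} \<in> E" by auto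
    then have "Suc n \<in> V" by (auto simp: sg_def)
    then show "(\<lambda>(V,E). (insert (Suc n) V, insert {n, Suc n} E)) ((\<lambda>(V,E). (V - {Suc n}, E - {{n, Suc n}})) x) = x"
      using x h by (simp add: insert_absorb)
  qed
  subgoal
  proof (rule image_subsetI)
    fix x assume "x \<in> {(V,E)\<in>sg n. n \<in> V}"
    then obtain V E where x: "x = (V,E)" and h: "(V,E) \<in> sg n" "n \<in> V" by auto
    then have "1 \<le> n" by (auto simp: sg_def)
    then have PE: "Pn_edges (Suc n) = insert {n, Suc n} (Pn_edges n)" by (rule Pn_edges_Suc)
    have "(insert (Suc n) V, insert {n, Suc n} E) \<in> {(V,E)\<in>sg (Suc n). {n, Suc n} \<in> E}"
      using h unfolding sg_def PE by auto
    then show "(\<lambda>(V,E). (insert (Suc n) V, insert {n, Suc n} E)) x \<in> {(V,E)\<in>sg (Suc n). {n, Suc n} \<in> E}"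
      using x by simp
  qed
  subgoal
  proof (rule image_subsetI)
    fix x assume "x \<in> {(V,E)\<in>sg (Suc n). {n, Suc n} \<in> E}"
    then obtain V E where x: "x = (V,E)" and hV: "V \<subseteq> {1..Suc n}" and hE: "E \<subseteq> Pn_edges (Suc n)"
      and hc: "\<forall>e\<in>E. e \<subseteq> V" and he: "{n, Suc n} \<in> E" by (auto simp: sg_def)
    have E: "E - {{n, Suc n}} \<subseteq> Pn_edges n"
    proof
      fix e assume "e \<in> E - {{n, Suc n}}"
      then show "e \<in> Pn_edges n" using hE Pn_edges_Suc_cases[of e n] by blast
    qed
    have c: "\<forall>e\<in>E - {{n, Suc n}}. e \<subseteq> V - {Suc n}"
    proof
      fix e assume e: "e \<in> E - {{n, Suc n}}"
      then have "e \<subseteq> {1..n}" using E Pn_edges_sub by blast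
      moreover have "e \<subseteq> V" using e hc by blast
      ultimately show "e \<subseteq> V - {Suc n}" by auto
    qed
    have "n \<in> V" using he hc by blast
    moreover have "V - {Suc n} \<subseteq> {1..n}" using hV by (auto simp: le_Suc_eq)
    ultimately have "(V - {Suc n}, E - {{n, Suc n}}) \<in> {(V,E)\<in>sg n. n \<in> V}"
      using c E by (simp add: sg_def)
    then show "(\<lambda>(V,E). (V - {Suc n}, E - {{n, Suc n}})) x \<in> {(V,E)\<in>sg n. n \<in> V}"
      using x by simp
  qed
  done

lemma sg_Suc_split:
  "{(V,E)\<in>sg (Suc n). Suc n \<in> V} = {(V,E)\<in>sg (Suc n). Suc n \<in> V \<and> {n, Suc n} \<notin> E} \<union> {(V,E)\<in>sg (Suc n). {n, Suc n} \<in> E}"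
  by (auto simp: sg_def)

lemma card_insert_edge: assumes "(V,E) \<in> sg n" shows "card (insert {n, Suc n} E) = Suc (card E)"
proof -
  have E: "E \<subseteq> Pn_edges n" using assms by (auto simp: sg_def)
  then have "{n, Suc n} \<notin> E" using new_edge_notin[of n] by blast
  moreover have "finite E" using E by (rule finite_subset) simp
  ultimately show ?thesis by simp
qed

lemma GG_Suc: "GG y (Suc n) = HH y n + y * GG y n"
proof -
  let ?w = "\<lambda>(V::nat set, E::nat set set). y ^ card E"
  let ?S1 = "{(V,E)\<in>sg (Suc n). Suc n \<in> V \<and> {n, Suc n} \<notin> E}"
  let ?S2 = "{(V,E)\<in>sg (Suc n). {n, Suc n} \<in> E}"
  have fin: "finite ?S1" "finite ?S2"
    by (auto intro: finite_subset[OF _ finite_sg[of "Suc n"]])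
  have "GG y (Suc n) = sum ?w (?S1 \<union> ?S2)"
    unfolding GG_def sg_Suc_split by simp
  also have "\<dots> = sum ?w ?S1 + sum ?w ?S2"
    by (rule sum.union_disjoint) (use fin in auto)
  also have "sum ?w ?S1 = HH y n"
  proof -
    have "sum ?w ?S1 = (\<Sum>x\<in>sg n. ?w ((\<lambda>(V,E). (insert (Suc n) V, E)) x))"
      by (rule sum.reindex_bij_betw[OF sg_bij1, symmetric])
    also have "\<dots> = (\<Sum>x\<in>sg n. ?w x)"
      by (rule sum.cong) auto
    finally show ?thesis by (simp add: HH_def)
  qed
  also have "sum ?w ?S2 = y * GG y n"
  proof -
    have "sum ?w ?S2 = (\<Sum>x\<in>{(V,E)\<in>sg n. n \<in> V}. ?w ((\<lambda>(V,E). (insert (Suc n) V, insert {n, Suc n} E)) x))"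
      by (rule sum.reindex_bij_betw[OF sg_bij2, symmetric])
    also have "\<dots> = (\<Sum>x\<in>{(V,E)\<in>sg n. n \<in> V}. y * ?w x)"
      by (rule sum.cong) (auto simp: card_insert_edge)
    finally show ?thesis by (simp add: GG_def sum_distrib_left)
  qed
  finally show ?thesis .
qed

lemma HH_Suc: "HH y (Suc n) = HH y n + GG y (Suc n)"
proof -
  let ?w = "\<lambda>(V::nat set, E::nat set set). y ^ card E"
  have "sg (Suc n) = {(V,E)\<in>sg (Suc n). Suc n \<notin> V} \<union> {(V,E)\<in>sg (Suc n). Suc n \<in> V}" by auto
  then have "HH y (Suc n) = sum ?w ({(V,E)\<in>sg (Suc n). Suc n \<notin> V} \<union> {(V,E)\<in>sg (Suc n). Suc n \<in> V})"
    unfolding HH_def by simp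
  also have "\<dots> = sum ?w {(V,E)\<in>sg (Suc n). Suc n \<notin> V} + sum ?w {(V,E)\<in>sg (Suc n). Suc n \<in> V}"
    by (rule sum.union_disjoint) (auto intro: finite_subset[OF _ finite_sg[of "Suc n"]])
  finally show ?thesis unfolding sg_part0 HH_def GG_def by simp
qed

lemma GG_0: "GG y 0 = 0"
proof -
  have "{(V,E)\<in>sg 0. 0 \<in> V} = {}" by (auto simp: sg_0)
  then show ?thesis unfolding GG_def by (metis sum.empty)
qed
lemma HH_0: "HH y 0 = 1" by (simp add: HH_def sg_0)

lemma GG_XX: "GG y n = XX y n \<and> HH y n = XX y n + YY y n"
proof (induction n)
  case 0 then show ?case by (simp add: GG_0 HH_0)
next
  case (Suc n)
  then show ?case by (simp add: GG_Suc HH_Suc XX_Suc YY_Suc algebra_simps)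
qed

lemma GG_coeffs:
  assumes "1 \<le> n"
  shows "GG y n = (\<Sum>j\<le>n - 1. real (card {(V, E) \<in> subgraphs_Pn n. n \<in> V \<and> card E = j}) * y ^ j)"
proof -
  let ?S = "{(V,E)\<in>sg n. n \<in> V}"
  let ?g = "\<lambda>(V::nat set, E::nat set set). card E"
  have fin: "finite ?S" using finite_sg[of n] by (auto intro: finite_subset)
  have sub: "?g ` ?S \<subseteq> {..n-1}"
    using card_Pn_edges_le[of n] card_mono[of "Pn_edges n"] by (fastforce simp: sg_def)
  have "GG y n = (\<Sum>x\<in>?S. y ^ ?g x)"
    unfolding GG_def by (rule sum.cong) auto
  also have "\<dots> = (\<Sum>j\<le>n-1. \<Sum>x\<in>{x \<in> ?S. ?g x = j}. y ^ ?g x)"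
    by (rule sum.group[OF fin _ sub, symmetric]) simp
  also have "\<dots> = (\<Sum>j\<le>n - 1. real (card {(V, E) \<in> subgraphs_Pn n. n \<in> V \<and> card E = j}) * y ^ j)"
  proof (rule sum.cong[OF refl])
    fix j assume j: "j \<in> {..n-1}"
    have "{x \<in> ?S. ?g x = j} = {(V, E) \<in> subgraphs_Pn n. n \<in> V \<and> card E = j}"
      by (auto simp: sg_def subgraphs_Pn_def)
    moreover have "(\<Sum>x\<in>{x \<in> ?S. ?g x = j}. y ^ ?g x) = (\<Sum>x\<in>{x \<in> ?S. ?g x = j}. y ^ j)"
      by (rule sum.cong) auto
    ultimately show "(\<Sum>x\<in>{x \<in> ?S. ?g x = j}. y ^ ?g x) = real (card {(V, E) \<in> subgraphs_Pn n. n \<in> V \<and> card E = j}) * y ^ j"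
      by simp
  qed
  finally show ?thesis .
qed


section \<open>Reachability\<close>

definition adj :: "nat set set \<Rightarrow> (nat \<times> nat) set" where
  "adj A = {(x, y). {x, y} \<in> A}"

abbreviation reach :: "nat set set \<Rightarrow> nat \<Rightarrow> nat \<Rightarrow> bool" where
  "reach A u v \<equiv> (u, v) \<in> (adj A)\<^sup>*"

lemma adj_sym: "(x, y) \<in> adj A \<Longrightarrow> (y, x) \<in> adj A"
  by (auto simp: adj_def insert_commute)

lemma adj_conv: "(adj A)\<inverse> = adj A"
  using adj_sym by auto

lemma reach_sym: "reach A u v \<Longrightarrow> reach A v u"
  by (metis adj_conv rtrancl_converseI)

lemma reach_trans: "reach A u v \<Longrightarrow> reach A v w \<Longrightarrow> reach A u w"
  by (rule rtrancl_trans)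

lemma reach_mono: "A \<subseteq> B \<Longrightarrow> reach A u v \<Longrightarrow> reach B u v"
proof -
  assume "A \<subseteq> B"
  then have "adj A \<subseteq> adj B" by (auto simp: adj_def)
  then show "reach A u v \<Longrightarrow> reach B u v" using rtrancl_mono by blast
qed

lemma reach_edge: "{u, v} \<in> A \<Longrightarrow> reach A u v"
  by (auto simp: adj_def)

lemma reach_new_vertex_aux:
  assumes B: "\<forall>e\<in>B. w \<notin> e" and N: "w \<notin> N" and u: "u \<noteq> w"
    and r: "reach (B \<union> (\<lambda>a. {a, w}) ` N) u x"
  shows "(x \<noteq> w \<longrightarrow> reach B u x \<or> (\<exists>a\<in>N. \<exists>b\<in>N. reach B u a \<and> reach B b x))
       \<and> (x = w \<longrightarrow> (\<exists>a\<in>N. reach B u a))"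
  using r
proof (induction rule: rtrancl_induct)
  case base
  then show ?case using u by auto
next
  case (step x z)
  from step.hyps(2) have e: "{x, z} \<in> B \<union> (\<lambda>a. {a, w}) ` N" by (simp add: adj_def)
  show ?case
  proof (cases "{x, z} \<in> B")
    case True
    then have xz: "x \<noteq> w" "z \<noteq> w" using B by auto
    have st: "(x, z) \<in> adj B" using True by (simp add: adj_def)
    from step.IH xz have "reach B u x \<or> (\<exists>a\<in>N. \<exists>b\<in>N. reach B u a \<and> reach B b x)" by simp
    then show ?thesis using xz st
      by (meson rtrancl.rtrancl_into_rtrancl)
  next
    case False
    with e obtain a where a: "a \<in> N" "{x, z} = {a, w}" by auto
    then have "a \<noteq> w" using N by auto
    from a(2) have "(x = a \<and> z = w) \<or> (x = w \<and> z = a)" by (auto simp: doubleton_eq_iff)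
    then show ?thesis
    proof
      assume h: "x = a \<and> z = w"
      then have "x \<noteq> w" using \<open>a \<noteq> w\<close> by simp
      with step.IH have "reach B u x \<or> (\<exists>a\<in>N. \<exists>b\<in>N. reach B u a \<and> reach B b x)" by simp
      then show ?thesis using h a by auto
    next
      assume h: "x = w \<and> z = a"
      with step.IH obtain a' where "a' \<in> N" "reach B u a'" by auto
      then show ?thesis using h a \<open>a \<noteq> w\<close> by auto
    qed
  qed
qed

lemma reach_new_vertex:
  assumes B: "\<forall>e\<in>B. w \<notin> e" and N: "w \<notin> N" and u: "u \<noteq> w" and v: "v \<noteq> w"
  shows "reach (B \<union> (\<lambda>a. {a, w}) ` N) u v \<longleftrightarrow>
           reach B u v \<or> (\<exists>a\<in>N. \<exists>b\<in>N. reach B u a \<and> reach B b v)"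
proof
  assume "reach (B \<union> (\<lambda>a. {a, w}) ` N) u v"
  then show "reach B u v \<or> (\<exists>a\<in>N. \<exists>b\<in>N. reach B u a \<and> reach B b v)"
    using reach_new_vertex_aux[OF B N u] v by blast
next
  let ?A = "B \<union> (\<lambda>a. {a, w}) ` N"
  assume "reach B u v \<or> (\<exists>a\<in>N. \<exists>b\<in>N. reach B u a \<and> reach B b v)"
  then show "reach ?A u v"
  proof
    assume "reach B u v" then show ?thesis by (rule reach_mono[rotated]) auto
  next
    assume "\<exists>a\<in>N. \<exists>b\<in>N. reach B u a \<and> reach B b v"
    then obtain a b where ab: "a \<in> N" "b \<in> N" "reach B u a" "reach B b v" by blast
    have "reach ?A u a" using ab(3) by (rule reach_mono[rotated]) auto
    moreover have "reach ?A a w" using ab(1) by (intro reach_edge) auto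
    moreover have "reach ?A w b" using ab(2) by (intro reach_edge) (auto simp: insert_commute)
    moreover have "reach ?A b v" using ab(4) by (rule reach_mono[rotated]) auto
    ultimately show ?thesis by (meson reach_trans)
  qed
qed

lemma reach_new_vertex_w:
  assumes B: "\<forall>e\<in>B. w \<notin> e" and N: "w \<notin> N" and u: "u \<noteq> w"
  shows "reach (B \<union> (\<lambda>a. {a, w}) ` N) u w \<longleftrightarrow> (\<exists>a\<in>N. reach B u a)"
proof
  assume "reach (B \<union> (\<lambda>a. {a, w}) ` N) u w"
  then show "\<exists>a\<in>N. reach B u a"
    using reach_new_vertex_aux[OF B N u] by blast
next
  let ?A = "B \<union> (\<lambda>a. {a, w}) ` N"
  assume "\<exists>a\<in>N. reach B u a"
  then obtain a where a: "a \<in> N" "reach B u a" by blast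
  have "reach ?A u a" using a(2) by (rule reach_mono[rotated]) auto
  moreover have "reach ?A a w" using a(1) by (intro reach_edge) auto
  ultimately show "reach ?A u w" by (meson reach_trans)
qed

lemma ncomp_adj: "ncomp V A = card (V // {(u, v). u \<in> V \<and> v \<in> V \<and> (u, v) \<in> (adj A)\<^sup>*})"
  by (simp add: ncomp_def adj_def)

lemma ncomp_conn:
  assumes "finite V" "0 \<in> V" "\<forall>v\<in>V. reach A v 0"
  shows "ncomp V A = 1"
proof -
  let ?R = "{(u, v). u \<in> V \<and> v \<in> V \<and> (u, v) \<in> (adj A)\<^sup>*}"
  have "?R `` {x} = V" if "x \<in> V" for x
  proof
    show "?R `` {x} \<subseteq> V" by auto
    show "V \<subseteq> ?R `` {x}"
    proof
      fix v assume v: "v \<in> V"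
      have "reach A x 0" using assms(3) that by blast
      moreover have "reach A 0 v" using assms(3) v reach_sym by blast
      ultimately show "v \<in> ?R `` {x}" using v that by (auto intro: reach_trans)
    qed
  qed
  then have "V // ?R = (\<Union>x\<in>V. {V})" unfolding quotient_def by (intro SUP_cong) auto
  also have "\<dots> = {V}" using assms(2) by blast
  finally show ?thesis unfolding ncomp_adj by simp
qed

lemma ncomp_ge1:
  assumes "finite V" "V \<noteq> {}"
  shows "1 \<le> ncomp V A"
proof -
  let ?R = "{(u, v). u \<in> V \<and> v \<in> V \<and> (u, v) \<in> (adj A)\<^sup>*}"
  have "finite (V // ?R)"
    by (rule finite_quotient[OF assms(1)]) auto
  moreover have "V // ?R \<noteq> {}" using assms(2) by (auto simp: quotient_def)
  ultimately show ?thesis unfolding ncomp_adj by (simp add: Suc_le_eq card_gt_0_iff)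
qed

lemma card2: "a \<noteq> b \<Longrightarrow> card {a, b} = 2"
  by simp

lemma ncomp_disconn:
  assumes "finite V" "0 \<in> V" "v \<in> V" "\<not> reach A v 0"
  shows "2 \<le> ncomp V A"
proof -
  let ?R = "{(u, v). u \<in> V \<and> v \<in> V \<and> (u, v) \<in> (adj A)\<^sup>*}"
  have fin: "finite (V // ?R)"
    by (rule finite_quotient[OF assms(1)]) auto
  have c0: "?R `` {0} \<in> V // ?R" using assms(2) by (auto simp: quotient_def)
  have cv: "?R `` {v} \<in> V // ?R" using assms(3) by (auto simp: quotient_def)
  have "v \<in> ?R `` {v}" using assms(3) by auto
  moreover have "v \<notin> ?R `` {0}"
  proof
    assume "v \<in> ?R `` {0}"
    then have "reach A 0 v" by auto
    then have "reach A v 0" by (rule reach_sym)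
    with assms(4) show False by simp
  qed
  ultimately have neq: "?R `` {0} \<noteq> ?R `` {v}" by blast
  have c2: "card {?R `` {0}, ?R `` {v}} = 2" by (rule card2[OF neq])
  have sub: "{?R `` {0}, ?R `` {v}} \<subseteq> V // ?R" using c0 cv by simp
  have "card {?R `` {0}, ?R `` {v}} \<le> card (V // ?R)" by (rule card_mono[OF fin sub])
  then show ?thesis unfolding ncomp_adj using c2 by linarith
qed


lemma Fn_edges_sub: "e \<in> Fn_edges n \<Longrightarrow> e \<subseteq> {0..n}"
  by (auto simp: Fn_edges_def Pn_edges_def)

lemma finite_Fn_edges[simp]: "finite (Fn_edges n)"
proof -
  have "{{0, i} | i. 1 \<le> i \<and> i \<le> n} = (\<lambda>i. {0, i}) ` {1..n}" by auto
  then show ?thesis by (simp add: Fn_edges_def)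
qed

lemma Fn_edges_Suc: "1 \<le> n \<Longrightarrow> Fn_edges (Suc n) = Fn_edges n \<union> (\<lambda>a. {a, Suc n}) ` {0, n}"
  unfolding Fn_edges_def using Pn_edges_Suc[of n] by (auto simp: le_Suc_eq insert_commute)

lemma w_notin: "e \<in> Fn_edges n \<Longrightarrow> Suc n \<notin> e"
  using Fn_edges_sub by fastforce

definition ext :: "nat \<Rightarrow> nat set set \<Rightarrow> nat set \<Rightarrow> nat set set" where
  "ext n A N = A \<union> (\<lambda>a. {a, Suc n}) ` N"

lemma new_edge_eq: "a \<noteq> w \<Longrightarrow> b \<noteq> w \<Longrightarrow> {a, w} = {b, w} \<longleftrightarrow> a = b"
  by (auto simp: doubleton_eq_iff)

lemma new_edge_notin_Fn: "a \<le> n \<Longrightarrow> {a, Suc n} \<notin> Fn_edges n"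
  using w_notin by blast

lemma ext_parts:
  assumes "A \<subseteq> Fn_edges n" "N \<subseteq> {0..n}"
  shows "ext n A N \<inter> Fn_edges n = A" "{a \<in> {0..n}. {a, Suc n} \<in> ext n A N} = N"
proof -
  show "ext n A N \<inter> Fn_edges n = A"
    using assms new_edge_notin_Fn by (auto simp: ext_def)
  show "{a \<in> {0..n}. {a, Suc n} \<in> ext n A N} = N"
  proof (intro equalityI subsetI)
    fix a assume a: "a \<in> {a \<in> {0..n}. {a, Suc n} \<in> ext n A N}"
    then have "{a, Suc n} \<notin> A" using assms new_edge_notin_Fn by auto
    with a obtain b where "b \<in> N" "{a, Suc n} = {b, Suc n}" by (auto simp: ext_def)
    moreover have "b \<noteq> Suc n" using \<open>b \<in> N\<close> assms by auto
    ultimately show "a \<in> N" using a new_edge_eq[of a "Suc n" b] by auto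
  next
    fix a assume "a \<in> N" then show "a \<in> {a \<in> {0..n}. {a, Suc n} \<in> ext n A N}"
      using assms by (auto simp: ext_def)
  qed
qed

lemma ext_inj:
  assumes "A \<subseteq> Fn_edges n" "N \<subseteq> {0..n}" "B \<subseteq> Fn_edges n" "M \<subseteq> {0..n}" "ext n A N = ext n B M"
  shows "A = B \<and> N = M"
  using ext_parts[OF assms(1,2)] ext_parts[OF assms(3,4)] assms(5) by metis

lemma card_ext:
  assumes "A \<subseteq> Fn_edges n" "N \<subseteq> {0..n}"
  shows "card (ext n A N) = card A + card N"
proof -
  have fA: "finite A" using assms(1) by (rule finite_subset) simp
  have fN: "finite N" using assms(2) by (rule finite_subset) simp
  have inj: "inj_on (\<lambda>a. {a, Suc n}) N"
    using assms(2) by (intro inj_onI) (auto simp: doubleton_eq_iff)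
  have disj: "A \<inter> (\<lambda>a. {a, Suc n}) ` N = {}"
  proof -
    have "{a, Suc n} \<notin> A" if "a \<in> N" for a
    proof -
      have "a \<le> n" using that assms(2) by auto
      then have "{a, Suc n} \<notin> Fn_edges n" by (rule new_edge_notin_Fn)
      then show ?thesis using assms(1) by blast
    qed
    then show ?thesis by auto
  qed
  have "card (ext n A N) = card A + card ((\<lambda>a. {a, Suc n}) ` N)"
    unfolding ext_def by (rule card_Un_disjoint) (use fA fN disj in auto)
  also have "\<dots> = card A + card N" using card_image[OF inj] by simp
  finally show ?thesis .
qed

lemma ext_decomp:
  assumes "1 \<le> n" "A \<subseteq> Fn_edges (Suc n)"
  shows "A = ext n (A \<inter> Fn_edges n) {a \<in> {0, n}. {a, Suc n} \<in> A}"
  using assms Fn_edges_Suc[OF assms(1)] by (auto simp: ext_def)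

section \<open>Connected and almost connected edge sets\<close>

definition Xs :: "nat \<Rightarrow> nat set set set" where
  "Xs n = {A. A \<subseteq> Fn_edges n \<and> (\<forall>v\<in>{0..n}. reach A v 0)}"

definition Ys :: "nat \<Rightarrow> nat set set set" where
  "Ys n = {A. A \<subseteq> Fn_edges n \<and> (\<forall>v\<in>{0..n}. reach A v 0 \<or> reach A v n) \<and> \<not> reach A n 0}"

context
  fixes n :: nat and A :: "nat set set" and N :: "nat set"
  assumes n1: "1 \<le> n" and A: "A \<subseteq> Fn_edges n" and N: "N \<subseteq> {0, n}"
begin

private lemma Bw: "\<forall>e\<in>A. Suc n \<notin> e" using A w_notin by blast
private lemma Nw: "Suc n \<notin> N" using N by auto

private lemma R_old: "u \<le> n \<Longrightarrow> v \<le> n \<Longrightarrow>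
   reach (ext n A N) u v \<longleftrightarrow> reach A u v \<or> (\<exists>a\<in>N. \<exists>b\<in>N. reach A u a \<and> reach A b v)"
  unfolding ext_def by (rule reach_new_vertex[OF Bw Nw]) auto

private lemma R_w: "u \<le> n \<Longrightarrow> reach (ext n A N) u (Suc n) \<longleftrightarrow> (\<exists>a\<in>N. reach A u a)"
  unfolding ext_def by (rule reach_new_vertex_w[OF Bw Nw]) auto

private lemma R_w0: "reach (ext n A N) (Suc n) 0 \<longleftrightarrow> (\<exists>a\<in>N. reach A 0 a)"
  using R_w[of 0] reach_sym by blast

private lemma sub_ext: "ext n A N \<subseteq> Fn_edges (Suc n)"
  using A N Fn_edges_Suc[OF n1] by (auto simp: ext_def)

lemma char1: "A \<in> Xs n \<Longrightarrow> N \<noteq> {} \<Longrightarrow> ext n A N \<in> Xs (Suc n)"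
proof -
  assume X: "A \<in> Xs n" and Ne: "N \<noteq> {}"
  have all: "reach A v 0" if "v \<le> n" for v using X that by (auto simp: Xs_def)
  have "reach (ext n A N) v 0" if v: "v \<le> Suc n" for v
  proof (cases "v = Suc n")
    case True
    obtain a where a: "a \<in> N" using Ne by auto
    then have "a \<le> n" using N by auto
    then have "reach A 0 a" using all reach_sym by blast
    then show ?thesis using True R_w0 a by blast
  next
    case False
    then have "v \<le> n" using v by auto
    then show ?thesis using R_old[of v 0] all by auto
  qed
  then show ?thesis using sub_ext by (auto simp: Xs_def)
qed

lemma char2: "A \<in> Ys n \<Longrightarrow> N = {0, n} \<Longrightarrow> ext n A N \<in> Xs (Suc n)"
proof -
  assume Y: "A \<in> Ys n" and NN: "N = {0, n}"
  have n0: "reach (ext n A N) n 0" using R_old[of n 0] NN by auto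
  have "reach (ext n A N) v 0" if v: "v \<le> Suc n" for v
  proof (cases "v = Suc n")
    case True
    then show ?thesis using R_w0 NN by auto
  next
    case False
    then have vn: "v \<le> n" using v by auto
    then have "reach A v 0 \<or> reach A v n" using Y by (auto simp: Ys_def)
    then show ?thesis
    proof
      assume "reach A v 0" then show ?thesis using R_old[of v 0] vn by auto
    next
      assume "reach A v n"
      then have "reach (ext n A N) v n" using R_old[of v n] vn by auto
      then show ?thesis using n0 by (rule reach_trans)
    qed
  qed
  then show ?thesis using sub_ext by (auto simp: Xs_def)
qed

lemma char3: "A \<in> Xs n \<Longrightarrow> N = {} \<Longrightarrow> ext n A N \<in> Ys (Suc n)"
proof -
  assume X: "A \<in> Xs n" and NN: "N = {}"
  have "reach (ext n A N) v 0 \<or> reach (ext n A N) v (Suc n)" if v: "v \<le> Suc n" for v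
  proof (cases "v = Suc n")
    case True then show ?thesis by auto
  next
    case False
    then have "v \<le> n" using v by auto
    then show ?thesis using R_old[of v 0] X by (auto simp: Xs_def)
  qed
  moreover have "\<not> reach (ext n A N) (Suc n) 0" using R_w0 NN by auto
  ultimately show ?thesis using sub_ext by (auto simp: Ys_def)
qed

lemma char4: "A \<in> Ys n \<Longrightarrow> N = {n} \<Longrightarrow> ext n A N \<in> Ys (Suc n)"
proof -
  assume Y: "A \<in> Ys n" and NN: "N = {n}"
  have "reach (ext n A N) v 0 \<or> reach (ext n A N) v (Suc n)" if v: "v \<le> Suc n" for v
  proof (cases "v = Suc n")
    case True then show ?thesis by auto
  next
    case False
    then have vn: "v \<le> n" using v by auto
    then have "reach A v 0 \<or> reach A v n" using Y by (auto simp: Ys_def)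
    then show ?thesis using R_old[of v 0] R_w[of v] vn NN by auto
  qed
  moreover have "\<not> reach (ext n A N) (Suc n) 0"
  proof
    assume "reach (ext n A N) (Suc n) 0"
    then have "reach A 0 n" using R_w0 NN by auto
    then have "reach A n 0" by (rule reach_sym)
    with Y show False by (auto simp: Ys_def)
  qed
  ultimately show ?thesis using sub_ext by (auto simp: Ys_def)
qed

lemma char5: "ext n A N \<in> Xs (Suc n) \<Longrightarrow> (A \<in> Xs n \<and> N \<noteq> {}) \<or> (A \<in> Ys n \<and> N = {0, n})"
proof -
  assume X: "ext n A N \<in> Xs (Suc n)"
  have Rv: "reach (ext n A N) v 0" if "v \<le> Suc n" for v using X that by (auto simp: Xs_def)
  have "\<exists>a\<in>N. reach A 0 a" using Rv[of "Suc n"] R_w0 by auto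
  then have Ne: "N \<noteq> {}" by auto
  show ?thesis
  proof (cases "\<forall>v\<in>{0..n}. reach A v 0")
    case True
    then show ?thesis using A Ne by (auto simp: Xs_def)
  next
    case False
    then obtain v0 where v0: "v0 \<le> n" "\<not> reach A v0 0" by auto
    have ex0: "\<exists>a\<in>N. \<exists>b\<in>N. reach A v0 a \<and> reach A b 0" using Rv[of v0] R_old[of v0 0] v0 by auto
    then obtain a b where ab: "a \<in> N" "b \<in> N" "reach A v0 a" "reach A b 0" by blast
    have "a \<noteq> 0"
    proof
      assume "a = 0" with ab(3) v0(2) show False by simp
    qed
    then have an: "a = n" using ab N by auto
    have nn0: "\<not> reach A n 0"
    proof
      assume "reach A n 0" then have "reach A v0 0" using ab(3) an by (metis reach_trans)
      with v0 show False by simp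
    qed
    then have "b \<noteq> n" using ab by auto
    then have "b = 0" using ab N by auto
    then have NN: "N = {0, n}" using N ab an by auto
    have "reach A v 0 \<or> reach A v n" if v: "v \<le> n" for v
    proof -
      have "reach (ext n A N) v 0" using Rv v by auto
      then have "reach A v 0 \<or> (\<exists>a\<in>N. \<exists>b\<in>N. reach A v a \<and> reach A b 0)" using R_old[of v 0] v by auto
      then show ?thesis using NN by auto
    qed
    then have "A \<in> Ys n" using A nn0 by (auto simp: Ys_def)
    then show ?thesis using NN by auto
  qed
qed

lemma char6: "ext n A N \<in> Ys (Suc n) \<Longrightarrow> (A \<in> Xs n \<and> N = {}) \<or> (A \<in> Ys n \<and> N = {n})"
proof -
  assume Y: "ext n A N \<in> Ys (Suc n)"
  have Rv: "reach (ext n A N) v 0 \<or> reach (ext n A N) v (Suc n)" if "v \<le> Suc n" for v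
    using Y that by (auto simp: Ys_def)
  have nw: "\<not> reach (ext n A N) (Suc n) 0" using Y by (auto simp: Ys_def)
  then have "\<not> (\<exists>a\<in>N. reach A 0 a)" using R_w0 by simp
  then have n0: "0 \<notin> N" by auto
  show ?thesis
  proof (cases "n \<in> N")
    case False
    then have NN: "N = {}" using N n0 by auto
    have "reach A v 0" if v: "v \<le> n" for v
    proof -
      have "\<not> reach (ext n A N) v (Suc n)" using R_w[of v] v NN by auto
      then have "reach (ext n A N) v 0" using Rv[of v] v by auto
      then show ?thesis using R_old[of v 0] v NN by auto
    qed
    then show ?thesis using A NN by (auto simp: Xs_def)
  next
    case True
    then have NN: "N = {n}" using N n0 by auto
    have nn0: "\<not> reach A n 0"
    proof
      assume "reach A n 0"
      then have "reach A 0 n" by (rule reach_sym)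
      then show False using \<open>\<not> (\<exists>a\<in>N. reach A 0 a)\<close> NN by auto
    qed
    have "reach A v 0 \<or> reach A v n" if v: "v \<le> n" for v
    proof -
      have "reach (ext n A N) v 0 \<or> reach (ext n A N) v (Suc n)" using Rv[of v] v by auto
      then show ?thesis
      proof
        assume "reach (ext n A N) v 0"
        then have "reach A v 0 \<or> (reach A v n \<and> reach A n 0)" using R_old[of v 0] v NN by auto
        then show ?thesis by auto
      next
        assume "reach (ext n A N) v (Suc n)"
        then show ?thesis using R_w[of v] v NN by auto
      qed
    qed
    then have "A \<in> Ys n" using A nn0 by (auto simp: Ys_def)
    then show ?thesis using NN by auto
  qed
qed

end


lemma subsets_0n: "N \<subseteq> {0, n} \<Longrightarrow> N = {} \<or> N = {0} \<or> N = {n} \<or> N = {0, n}"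
  by auto

lemma Xs_sub: "A \<in> Xs n \<Longrightarrow> A \<subseteq> Fn_edges n" by (simp add: Xs_def)
lemma Ys_sub: "A \<in> Ys n \<Longrightarrow> A \<subseteq> Fn_edges n" by (simp add: Ys_def)

lemma Xs_Ys_disj: "Xs n \<inter> Ys n = {}"
proof -
  have "A \<in> Xs n \<Longrightarrow> A \<in> Ys n \<Longrightarrow> False" for A
    by (auto simp: Xs_def Ys_def)
  then show ?thesis by blast
qed

lemma sub0n: "1 \<le> (n::nat) \<Longrightarrow> N \<subseteq> {0, n} \<Longrightarrow> N \<subseteq> {0..n}"
  by (rule subset_trans) auto

lemma Xs_Suc:
  assumes n1: "1 \<le> n"
  shows "Xs (Suc n) = (\<lambda>A. ext n A {0}) ` Xs n \<union> (\<lambda>A. ext n A {n}) ` Xs n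
                    \<union> (\<lambda>A. ext n A {0, n}) ` Xs n \<union> (\<lambda>A. ext n A {0, n}) ` Ys n"
proof (intro equalityI subsetI)
  fix A assume A: "A \<in> Xs (Suc n)"
  let ?A' = "A \<inter> Fn_edges n" and ?N = "{a \<in> {0, n}. {a, Suc n} \<in> A}"
  have eq: "A = ext n ?A' ?N" by (rule ext_decomp[OF n1 Xs_sub[OF A]])
  have s1: "?A' \<subseteq> Fn_edges n" by auto
  have s2: "?N \<subseteq> {0, n}" by auto
  have "ext n ?A' ?N \<in> Xs (Suc n)" using A eq by simp
  from char5[OF n1 s1 s2 this] subsets_0n[OF s2]
  have "(?A' \<in> Xs n \<and> ?N = {0}) \<or> (?A' \<in> Xs n \<and> ?N = {n}) \<or> (?A' \<in> Xs n \<and> ?N = {0, n})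
        \<or> (?A' \<in> Ys n \<and> ?N = {0, n})" by blast
  then show "A \<in> (\<lambda>A. ext n A {0}) ` Xs n \<union> (\<lambda>A. ext n A {n}) ` Xs n
                    \<union> (\<lambda>A. ext n A {0, n}) ` Xs n \<union> (\<lambda>A. ext n A {0, n}) ` Ys n"
    by (elim disjE conjE) (metis (no_types, lifting) UnI1 UnI2 eq image_eqI)+
next
  fix A assume "A \<in> (\<lambda>A. ext n A {0}) ` Xs n \<union> (\<lambda>A. ext n A {n}) ` Xs n
                    \<union> (\<lambda>A. ext n A {0, n}) ` Xs n \<union> (\<lambda>A. ext n A {0, n}) ` Ys n"
  then show "A \<in> Xs (Suc n)"
    using char1[OF n1 Xs_sub, of _ "{0}"] char1[OF n1 Xs_sub, of _ "{n}"] char1[OF n1 Xs_sub, of _ "{0,n}"]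
      char2[OF n1 Ys_sub, of _ "{0,n}"]
    by auto
qed

lemma Ys_Suc:
  assumes n1: "1 \<le> n"
  shows "Ys (Suc n) = (\<lambda>A. ext n A {}) ` Xs n \<union> (\<lambda>A. ext n A {n}) ` Ys n"
proof (intro equalityI subsetI)
  fix A assume A: "A \<in> Ys (Suc n)"
  let ?A' = "A \<inter> Fn_edges n" and ?N = "{a \<in> {0, n}. {a, Suc n} \<in> A}"
  have eq: "A = ext n ?A' ?N" by (rule ext_decomp[OF n1 Ys_sub[OF A]])
  have s1: "?A' \<subseteq> Fn_edges n" by auto
  have s2: "?N \<subseteq> {0, n}" by auto
  have "ext n ?A' ?N \<in> Ys (Suc n)" using A eq by simp
  from char6[OF n1 s1 s2 this]
  show "A \<in> (\<lambda>A. ext n A {}) ` Xs n \<union> (\<lambda>A. ext n A {n}) ` Ys n"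
    by (elim disjE conjE) (metis (no_types, lifting) UnI1 UnI2 eq image_eqI)+
next
  fix A assume "A \<in> (\<lambda>A. ext n A {}) ` Xs n \<union> (\<lambda>A. ext n A {n}) ` Ys n"
  then show "A \<in> Ys (Suc n)"
    using char3[OF n1 Xs_sub, of _ "{}"] char4[OF n1 Ys_sub, of _ "{n}"]
    by auto
qed

lemma finite_Xs: "finite (Xs n)"
  by (rule finite_subset[of _ "Pow (Fn_edges n)"]) (auto simp: Xs_def)
lemma finite_Ys: "finite (Ys n)"
  by (rule finite_subset[of _ "Pow (Fn_edges n)"]) (auto simp: Ys_def)

lemma ext_inj_on:
  assumes "1 \<le> n" "N \<subseteq> {0, n}" "S \<subseteq> Pow (Fn_edges n)"
  shows "inj_on (\<lambda>A. ext n A N) S"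
proof (rule inj_onI)
  fix A B assume "A \<in> S" "B \<in> S" "ext n A N = ext n B N"
  then show "A = B" using ext_inj[of A n N B N] assms sub0n[OF assms(1,2)] by auto
qed

lemma ext_disj:
  assumes "1 \<le> n" "N \<subseteq> {0, n}" "M \<subseteq> {0, n}" "N \<noteq> M" "S \<subseteq> Pow (Fn_edges n)" "T \<subseteq> Pow (Fn_edges n)"
  shows "(\<lambda>A. ext n A N) ` S \<inter> (\<lambda>A. ext n A M) ` T = {}"
proof -
  have "ext n A N \<noteq> ext n B M" if "A \<in> S" "B \<in> T" for A B
  proof
    assume e: "ext n A N = ext n B M"
    have "A \<subseteq> Fn_edges n" "B \<subseteq> Fn_edges n" using assms that by auto
    then have "N = M" using ext_inj[OF _ sub0n[OF assms(1,2)] _ sub0n[OF assms(1,3)] e] by blast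
    with assms(4) show False by simp
  qed
  then show ?thesis by blast
qed

lemma ext_disj2:
  assumes "1 \<le> n" "N \<subseteq> {0, n}"
  shows "(\<lambda>A. ext n A N) ` Xs n \<inter> (\<lambda>A. ext n A N) ` Ys n = {}"
proof -
  have "ext n A N \<noteq> ext n B N" if "A \<in> Xs n" "B \<in> Ys n" for A B
  proof
    assume "ext n A N = ext n B N"
    then have "A = B" using ext_inj[of A n N B N] assms that Xs_sub Ys_sub sub0n[OF assms(1,2)] by auto
    then show False using that Xs_Ys_disj by auto
  qed
  then show ?thesis by blast
qed

lemma card_bounds: "1 \<le> n \<Longrightarrow> (\<forall>A\<in>Xs n. n \<le> card A) \<and> (\<forall>A\<in>Ys n. n \<le> card A + 1)"
proof (induction n rule: dec_induct)
  case base
  have "A \<in> Xs 1 \<Longrightarrow> 1 \<le> card A" for A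
  proof -
    assume A: "A \<in> Xs 1"
    then have "reach A 1 0" by (auto simp: Xs_def)
    then have "A \<noteq> {}" by (auto simp: adj_def)
    moreover have "finite A" using A finite_Fn_edges[of 1] by (auto simp: Xs_def intro: finite_subset)
    ultimately show ?thesis by (simp add: Suc_le_eq card_gt_0_iff)
  qed
  then show ?case by auto
next
  case (step m)
  have m1: "1 \<le> m" using step by simp
  have sN: "{0} \<subseteq> {0..m}" "{m} \<subseteq> {0..m}" "{0, m} \<subseteq> {0..m}" "{} \<subseteq> {0..m}" by auto
  have c2: "card {0, m} = 2" using m1 by simp
  have X: "\<forall>A\<in>Xs (Suc m). Suc m \<le> card A"
    unfolding Xs_Suc[OF m1]
    using step.IH card_ext[OF Xs_sub sN(1)] card_ext[OF Xs_sub sN(2)] card_ext[OF Xs_sub sN(3)]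
      card_ext[OF Ys_sub sN(3)] c2 by fastforce
  have Y: "\<forall>A\<in>Ys (Suc m). Suc m \<le> card A + 1"
    unfolding Ys_Suc[OF m1]
    using step.IH card_ext[OF Xs_sub sN(4)] card_ext[OF Ys_sub sN(2)] by fastforce
  from X Y show ?case by simp
qed

definition TX :: "real \<Rightarrow> nat \<Rightarrow> real" where
  "TX y n = (\<Sum>A\<in>Xs n. (y - 1) ^ (card A - n))"
definition TY :: "real \<Rightarrow> nat \<Rightarrow> real" where
  "TY y n = (\<Sum>A\<in>Ys n. (y - 1) ^ (card A + 1 - n))"

lemma sum_ext:
  assumes n1: "1 \<le> n" and N: "N \<subseteq> {0, n}" and S: "S \<subseteq> Pow (Fn_edges n)"
  shows "(\<Sum>A\<in>(\<lambda>A. ext n A N) ` S. f (card A)) = (\<Sum>A\<in>S. f (card A + card N))"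
proof -
  have "(\<Sum>A\<in>(\<lambda>A. ext n A N) ` S. f (card A)) = (\<Sum>A\<in>S. f (card (ext n A N)))"
    by (subst sum.reindex[OF ext_inj_on[OF n1 N S]]) simp
  also have "\<dots> = (\<Sum>A\<in>S. f (card A + card N))"
    by (rule sum.cong) (use S sub0n[OF n1 N] card_ext in auto)
  finally show ?thesis .
qed

lemma XsP: "Xs n \<subseteq> Pow (Fn_edges n)" and YsP: "Ys n \<subseteq> Pow (Fn_edges n)"
  by (auto simp: Xs_def Ys_def)

lemma TX_Suc:
  assumes n1: "1 \<le> n"
  shows "TX y (Suc n) = (1 + y) * TX y n + TY y n"
proof -
  let ?f = "\<lambda>k. (y - 1) ^ (k - Suc n)"
  let ?S1 = "(\<lambda>A. ext n A {0}) ` Xs n" and ?S2 = "(\<lambda>A. ext n A {n}) ` Xs n"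
  let ?S3 = "(\<lambda>A. ext n A {0, n}) ` Xs n" and ?S4 = "(\<lambda>A. ext n A {0, n}) ` Ys n"
  have s: "{0} \<subseteq> {0, n}" "{n} \<subseteq> {0, n}" "{0, n} \<subseteq> {0, (n::nat)}" by auto
  have d12: "?S1 \<inter> ?S2 = {}" using n1 by (intro ext_disj[OF n1 s(1) s(2) _ XsP XsP]) auto
  have d13: "?S1 \<inter> ?S3 = {}" using n1 by (intro ext_disj[OF n1 s(1) s(3) _ XsP XsP]) auto
  have d14: "?S1 \<inter> ?S4 = {}" using n1 by (intro ext_disj[OF n1 s(1) s(3) _ XsP YsP]) auto
  have d23: "?S2 \<inter> ?S3 = {}" using n1 by (intro ext_disj[OF n1 s(2) s(3) _ XsP XsP]) auto
  have d24: "?S2 \<inter> ?S4 = {}" using n1 by (intro ext_disj[OF n1 s(2) s(3) _ XsP YsP]) auto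
  have d34: "?S3 \<inter> ?S4 = {}" by (rule ext_disj2[OF n1 s(3)])
  have fin: "finite ?S1" "finite ?S2" "finite ?S3" "finite ?S4"
    using finite_Xs finite_Ys by auto
  have "TX y (Suc n) = (\<Sum>A\<in>?S1 \<union> ?S2 \<union> ?S3 \<union> ?S4. ?f (card A))"
    unfolding TX_def Xs_Suc[OF n1] by simp
  also have "\<dots> = (\<Sum>A\<in>?S1. ?f (card A)) + (\<Sum>A\<in>?S2. ?f (card A)) + (\<Sum>A\<in>?S3. ?f (card A)) + (\<Sum>A\<in>?S4. ?f (card A))"
    using fin d12 d13 d14 d23 d24 d34
    by (simp add: sum.union_disjoint Int_Un_distrib2)
  also have "(\<Sum>A\<in>?S1. ?f (card A)) = TX y n"
    unfolding sum_ext[OF n1 s(1) XsP, of ?f] TX_def by simp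
  also have "(\<Sum>A\<in>?S2. ?f (card A)) = TX y n"
    unfolding sum_ext[OF n1 s(2) XsP, of ?f] TX_def by simp
  also have "(\<Sum>A\<in>?S3. ?f (card A)) = (y - 1) * TX y n"
  proof -
    have "(\<Sum>A\<in>?S3. ?f (card A)) = (\<Sum>A\<in>Xs n. ?f (card A + card {0, n}))"
      by (rule sum_ext[OF n1 s(3) XsP])
    also have "\<dots> = (\<Sum>A\<in>Xs n. (y - 1) * (y - 1) ^ (card A - n))"
    proof (rule sum.cong[OF refl])
      fix A assume "A \<in> Xs n"
      then have "n \<le> card A" using card_bounds[OF n1] by auto
      moreover have "card {0, n} = 2" using n1 by simp
      ultimately have "card A + card {0, n} - Suc n = Suc (card A - n)" by simp
      then show "?f (card A + card {0, n}) = (y - 1) * (y - 1) ^ (card A - n)" by simp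
    qed
    finally show ?thesis by (simp add: TX_def sum_distrib_left)
  qed
  also have "(\<Sum>A\<in>?S4. ?f (card A)) = TY y n"
  proof -
    have "(\<Sum>A\<in>?S4. ?f (card A)) = (\<Sum>A\<in>Ys n. ?f (card A + card {0, n}))"
      by (rule sum_ext[OF n1 s(3) YsP])
    also have "\<dots> = TY y n" unfolding TY_def using n1 by (intro sum.cong) auto
    finally show ?thesis .
  qed
  finally show ?thesis by (simp add: algebra_simps)
qed

lemma TY_Suc:
  assumes n1: "1 \<le> n"
  shows "TY y (Suc n) = TX y n + TY y n"
proof -
  let ?f = "\<lambda>k. (y - 1) ^ (k + 1 - Suc n)"
  let ?S1 = "(\<lambda>A. ext n A {}) ` Xs n" and ?S2 = "(\<lambda>A. ext n A {n}) ` Ys n"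
  have s: "{} \<subseteq> {0, n}" "{n} \<subseteq> {0, (n::nat)}" by auto
  have d12: "?S1 \<inter> ?S2 = {}" by (intro ext_disj[OF n1 s(1) s(2) _ XsP YsP]) auto
  have "TY y (Suc n) = (\<Sum>A\<in>?S1 \<union> ?S2. ?f (card A))"
    unfolding TY_def Ys_Suc[OF n1] by simp
  also have "\<dots> = (\<Sum>A\<in>?S1. ?f (card A)) + (\<Sum>A\<in>?S2. ?f (card A))"
    using finite_Xs finite_Ys d12 by (simp add: sum.union_disjoint)
  also have "(\<Sum>A\<in>?S1. ?f (card A)) = TX y n"
    unfolding sum_ext[OF n1 s(1) XsP, of ?f] TX_def by simp
  also have "(\<Sum>A\<in>?S2. ?f (card A)) = TY y n"
    unfolding sum_ext[OF n1 s(2) YsP, of ?f] TY_def by simp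
  finally show ?thesis .
qed

lemma Fn_edges_1: "Fn_edges (Suc 0) = {{0, 1}}"
  by (auto simp: Fn_edges_def Pn_edges_def)

lemma reach_empty: "reach {} u v \<longleftrightarrow> u = v"
  by (simp add: adj_def)

lemma Xs_1: "Xs (Suc 0) = {{{0, 1}}}"
proof -
  have P: "Pow {{0, 1::nat}} = {{}, {{0, 1}}}" by auto
  have a: "{} \<notin> Xs (Suc 0)" by (auto simp: Xs_def reach_empty)
  have r: "reach {{0, 1}} 1 0" by (rule reach_edge) (simp add: insert_commute)
  have b: "{{0, 1}} \<in> Xs (Suc 0)"
    unfolding Xs_def Fn_edges_1 using r by (auto simp: le_Suc_eq)
  have "Xs (Suc 0) \<subseteq> Pow {{0, 1}}" unfolding Xs_def Fn_edges_1 by auto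
  then show ?thesis using a b P by auto
qed

lemma Ys_1: "Ys (Suc 0) = {{}}"
proof -
  have P: "Pow {{0, 1::nat}} = {{}, {{0, 1}}}" by auto
  have a: "{} \<in> Ys (Suc 0)" by (auto simp: Ys_def reach_empty le_Suc_eq)
  have b: "{{0, 1}} \<notin> Ys (Suc 0)"
    unfolding Ys_def Fn_edges_1 using reach_edge[of 1 0 "{{0,1}}"] by (auto simp: insert_commute)
  have "Ys (Suc 0) \<subseteq> Pow {{0, 1}}" unfolding Ys_def Fn_edges_1 by auto
  then show ?thesis using a b P by auto
qed

lemma TXY_1: "TX y (Suc 0) = 1" "TY y (Suc 0) = 1"
  by (simp_all add: TX_def TY_def Xs_1 Ys_1)

lemma TX_XX_Suc: "TX y (Suc n) = XX y (Suc n) \<and> TY y (Suc n) = YY y (Suc n)"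
proof (induction n)
  case 0 then show ?case by (simp add: TXY_1 XX_Suc YY_Suc)
next
  case (Suc n)
  then show ?case by (simp add: TX_Suc TY_Suc XX_Suc[of y "Suc n"] YY_Suc[of y "Suc n"])
qed

lemma TX_XX: "1 \<le> n \<Longrightarrow> TX y n = XX y n"
  using TX_XX_Suc[of y "n - 1"] by simp

section \<open>Tutte polynomial\<close>

lemma tutte_TX:
  assumes n1: "1 \<le> n"
  shows "tutte (Fn_vertices n) (Fn_edges n) 1 y = TX y n"
proof -
  let ?V = "{0..n}"
  have V: "Fn_vertices n = ?V" by (simp add: Fn_vertices_def)
  have cV: "card ?V = Suc n" by simp
  have EX: "Fn_edges n \<in> Xs n"
  proof -
    have "reach (Fn_edges n) v 0" if "v \<in> {0..n}" for v
    proof (cases "v = 0")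
      case True then show ?thesis by simp
    next
      case False
      then have "{v, 0} \<in> Fn_edges n" using that by (auto simp: Fn_edges_def insert_commute)
      then show ?thesis by (rule reach_edge)
    qed
    then show ?thesis by (auto simp: Xs_def)
  qed
  have rX: "graph_rank ?V A = n" if "A \<in> Xs n" for A
  proof -
    have "ncomp ?V A = 1" by (rule ncomp_conn) (use that in \<open>auto simp: Xs_def\<close>)
    then show ?thesis by (simp add: graph_rank_def)
  qed
  have rE: "graph_rank ?V (Fn_edges n) = n" by (rule rX[OF EX])
  let ?t = "\<lambda>A. ((1::real) - 1) ^ (graph_rank ?V (Fn_edges n) - graph_rank ?V A) *
                 (y - 1) ^ (card A - graph_rank ?V A)"
  have zero: "?t A = 0" if "A \<in> Pow (Fn_edges n) - Xs n" for A
  proof -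
    from that obtain v where v: "v \<in> {0..n}" "\<not> reach A v 0" by (auto simp: Xs_def)
    then have "2 \<le> ncomp ?V A" by (intro ncomp_disconn) auto
    moreover have "graph_rank ?V A = Suc n - ncomp ?V A" by (simp add: graph_rank_def)
    ultimately have "graph_rank ?V A < n" using n1 by linarith
    then show ?thesis using rE by simp
  qed
  have "tutte (Fn_vertices n) (Fn_edges n) 1 y = sum ?t (Pow (Fn_edges n))"
    unfolding tutte_def V ..
  also have "\<dots> = sum ?t (Xs n)"
    by (rule sum.mono_neutral_right) (use zero XsP in auto)
  also have "\<dots> = TX y n"
    unfolding TX_def by (rule sum.cong) (auto simp: rX rE)
  finally show ?thesis .
qed


definition nb :: "nat \<Rightarrow> nat \<Rightarrow> nat set" where
  "nb n i = {j \<in> {1..n}. {i, j} \<in> Fn_edges n}"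

lemma nb_char: "i \<in> {1..n} \<Longrightarrow> nb n i = {j \<in> {1..n}. j = i + 1 \<or> i = j + 1}"
  by (auto simp: nb_def Fn_edges_def Pn_edges_def doubleton_eq_iff)

lemma nb_sub: "nb n i \<subseteq> {1..n}" by (auto simp: nb_def)
lemma finite_nb[simp]: "finite (nb n i)" by (rule finite_subset[OF nb_sub]) simp
lemma nb_irrefl: "i \<notin> nb n i" by (auto simp: nb_def Fn_edges_def Pn_edges_def doubleton_eq_iff)
lemma nb_sym: "i \<in> {1..n} \<Longrightarrow> j \<in> nb n i \<longleftrightarrow> i \<in> nb n j \<and> j \<in> {1..n}"
  by (auto simp: nb_def insert_commute Fn_edges_def Pn_edges_def doubleton_eq_iff)

lemma card_nb_le2: "i \<in> {1..n} \<Longrightarrow> card (nb n i) \<le> 2"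
proof -
  assume i: "i \<in> {1..n}"
  have "nb n i \<subseteq> {i - 1, i + 1}" using i by (auto simp: nb_char)
  then have "card (nb n i) \<le> card {i - 1, i + 1}" by (rule card_mono[rotated]) simp
  also have "\<dots> \<le> 2" by (simp add: card_insert_if)
  finally show ?thesis .
qed

lemma edges_at:
  assumes i: "i \<in> {1..n}"
  shows "{e \<in> Fn_edges n. i \<in> e} = (\<lambda>j. {i, j}) ` insert 0 (nb n i)"
proof (intro equalityI subsetI)
  fix e assume e: "e \<in> {e \<in> Fn_edges n. i \<in> e}"
  then have eE: "e \<in> Fn_edges n" "i \<in> e" by auto
  then obtain j where j: "e = {i, j}" by (auto simp: Fn_edges_def Pn_edges_def insert_commute)
  show "e \<in> (\<lambda>j. {i, j}) ` insert 0 (nb n i)"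
  proof (cases "j = 0")
    case True then show ?thesis using j by auto
  next
    case False
    then have "j \<in> {1..n}" using eE(1) j Fn_edges_sub[of e n] by auto
    then have "j \<in> nb n i" using eE j by (auto simp: nb_def)
    then show ?thesis using j by auto
  qed
next
  fix e assume "e \<in> (\<lambda>j. {i, j}) ` insert 0 (nb n i)"
  then show "e \<in> {e \<in> Fn_edges n. i \<in> e}" using i
    by (auto simp: nb_def Fn_edges_def)
qed

lemma deg_nb: assumes i: "i \<in> {1..n}" shows "Fn_deg n i = card (nb n i) + 1"
proof -
  have inj: "inj_on (\<lambda>j. {i, j}) (insert 0 (nb n i))"
    using i nb_irrefl[of i n] by (intro inj_onI) (auto simp: doubleton_eq_iff)
  have "0 \<notin> nb n i" using nb_sub by fastforce
  then have "card (insert 0 (nb n i)) = card (nb n i) + 1" by simp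
  then show ?thesis unfolding Fn_deg_def edges_at[OF i] card_image[OF inj] .
qed

lemma deg_le3: "i \<in> {1..n} \<Longrightarrow> Fn_deg n i \<le> 3"
  using deg_nb card_nb_le2 by fastforce

section \<open>Toppling\<close>

lemma topple_in: "i \<in> {1..n} \<Longrightarrow> j \<in> {1..n} \<Longrightarrow>
   topple n i c j = (if j = i then c i - Fn_deg n i else if j \<in> nb n i then c j + 1 else c j)"
  by (auto simp: topple_def nb_def)

lemma topple_out: "i \<in> {1..n} \<Longrightarrow> j \<notin> {1..n} \<Longrightarrow> topple n i c j = c j"
  unfolding topple_def using Fn_edges_sub[of "{i, j}" n] by auto

lemma topple_configs: "i \<in> {1..n} \<Longrightarrow> c \<in> configs n \<Longrightarrow> topple n i c \<in> configs n"
  using topple_out by (auto simp: configs_def)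

definition tot :: "nat \<Rightarrow> (nat \<Rightarrow> nat) \<Rightarrow> nat" where
  "tot n c = (\<Sum>i=1..n. c i)"

lemma tot_topple:
  assumes i: "i \<in> {1..n}" and d: "Fn_deg n i \<le> c i"
  shows "tot n (topple n i c) + 1 = tot n c"
proof -
  have "int (topple n i c j) = int (c j) - (if j = i then int (Fn_deg n i) else 0)
          + (if j \<in> nb n i then 1 else 0)" if "j \<in> {1..n}" for j
    using topple_in[OF i that, of c] d nb_irrefl[of i n] by auto
  then have "(\<Sum>j=1..n. int (topple n i c j)) = (\<Sum>j=1..n. int (c j) - (if j = i then int (Fn_deg n i) else 0)
          + (if j \<in> nb n i then 1 else 0))" by (rule sum.cong[OF refl])
  also have "\<dots> = (\<Sum>j=1..n. int (c j)) - int (Fn_deg n i) + int (card (nb n i))"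
  proof -
    have "(\<Sum>j=1..n. (if j \<in> nb n i then 1 else 0::int)) = int (card (nb n i))"
    proof -
      have "(\<Sum>j=1..n. (if j \<in> nb n i then 1 else 0::int)) = (\<Sum>j\<in>{1..n} \<inter> nb n i. 1)"
        by (simp add: sum.If_cases)
      also have "{1..n} \<inter> nb n i = nb n i" using nb_sub by blast
      finally show ?thesis by simp
    qed
    moreover have "(\<Sum>j=1..n. (if j = i then int (Fn_deg n i) else 0)) = int (Fn_deg n i)"
      using i by (simp add: sum.delta)
    ultimately show ?thesis by (simp add: sum.distrib sum_subtractf)
  qed
  finally have "int (tot n (topple n i c)) = int (tot n c) - 1"
    unfolding tot_def using deg_nb[OF i] by simp
  then show ?thesis by linarith
qed

lemma step_tot: "topple_step n c d \<Longrightarrow> tot n d < tot n c"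
  unfolding topple_step_def using tot_topple by fastforce

lemma step_configs: "topple_step n c d \<Longrightarrow> c \<in> configs n \<Longrightarrow> d \<in> configs n"
  unfolding topple_step_def using topple_configs by blast

lemma steps_configs: "(topple_step n)\<^sup>*\<^sup>* c d \<Longrightarrow> c \<in> configs n \<Longrightarrow> d \<in> configs n"
  by (induction rule: rtranclp_induct) (auto intro: step_configs)

lemma stable_no_step: "stable n c \<Longrightarrow> \<not> topple_step n c d"
  unfolding stable_def topple_step_def by fastforce

lemma unstable_step: "c \<in> configs n \<Longrightarrow> \<not> stable n c \<Longrightarrow> \<exists>d. topple_step n c d"
  unfolding stable_def topple_step_def by (auto simp: not_less)

lemma stabilisation_exists: "c \<in> configs n \<Longrightarrow> \<exists>d. stabilises_to n c d"
proof (induction "tot n c" arbitrary: c rule: less_induct)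
  case less
  show ?case
  proof (cases "stable n c")
    case True then show ?thesis unfolding stabilises_to_def by blast
  next
    case False
    then obtain c1 where c1: "topple_step n c c1" using unstable_step less.prems by blast
    then have "tot n c1 < tot n c" by (rule step_tot)
    moreover have "c1 \<in> configs n" using c1 less.prems by (rule step_configs)
    ultimately obtain d where "stabilises_to n c1 d" using less.hyps by blast
    then show ?thesis using c1 unfolding stabilises_to_def by (meson converse_rtranclp_into_rtranclp)
  qed
qed

lemma topple_commute:
  assumes i: "i \<in> {1..n}" and j: "j \<in> {1..n}" and ij: "i \<noteq> j"
    and di: "Fn_deg n i \<le> c i" and dj: "Fn_deg n j \<le> c j"
  shows "topple n j (topple n i c) = topple n i (topple n j c)"
proof
  fix k
  show "topple n j (topple n i c) k = topple n i (topple n j c) k"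
  proof (cases "k \<in> {1..n}")
    case False then show ?thesis using i j by (simp add: topple_out)
  next
    case True
    then show ?thesis using i j ij di dj by (auto simp: topple_in)
  qed
qed

lemma topple_keeps_unstable:
  assumes i: "i \<in> {1..n}" and j: "j \<in> {1..n}" and ij: "i \<noteq> j" and dj: "Fn_deg n j \<le> c j"
  shows "Fn_deg n j \<le> topple n i c j"
  using topple_in[OF i j] ij dj by auto

lemma stabilisation_unique:
  "c \<in> configs n \<Longrightarrow> stabilises_to n c d1 \<Longrightarrow> stabilises_to n c d2 \<Longrightarrow> d1 = d2"
proof (induction "tot n c" arbitrary: c d1 d2 rule: less_induct)
  case less
  show ?case
  proof (cases "stable n c")
    case True
    then have "d1 = c" "d2 = c" using less.prems stable_no_step
      by (metis converse_rtranclpE stabilises_to_def)+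
    then show ?thesis by simp
  next
    case False
    from less.prems(2) False obtain c1 where s1: "topple_step n c c1" "stabilises_to n c1 d1"
      unfolding stabilises_to_def by (metis converse_rtranclpE)
    from less.prems(3) False obtain c2 where s2: "topple_step n c c2" "stabilises_to n c2 d2"
      unfolding stabilises_to_def by (metis converse_rtranclpE)
    have cf1: "c1 \<in> configs n" using s1(1) less.prems(1) by (rule step_configs)
    have cf2: "c2 \<in> configs n" using s2(1) less.prems(1) by (rule step_configs)
    have t1: "tot n c1 < tot n c" using s1(1) by (rule step_tot)
    have t2: "tot n c2 < tot n c" using s2(1) by (rule step_tot)
    show ?thesis
    proof (cases "c1 = c2")
      case True then show ?thesis using less.hyps[OF t1 cf1 s1(2)] s2(2) by simp
    next
      case False
      from s1(1) obtain i where i: "i \<in> {1..n}" "Fn_deg n i \<le> c i" "c1 = topple n i c"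
        unfolding topple_step_def by blast
      from s2(1) obtain j where j: "j \<in> {1..n}" "Fn_deg n j \<le> c j" "c2 = topple n j c"
        unfolding topple_step_def by blast
      have ij: "i \<noteq> j" using False i j by auto
      let ?c3 = "topple n j c1"
      have c3: "?c3 = topple n i c2" using topple_commute[OF i(1) j(1) ij i(2) j(2)] i j by simp
      have st13: "topple_step n c1 ?c3"
        unfolding topple_step_def using j topple_keeps_unstable[of i n j c] i ij by auto
      have st23: "topple_step n c2 ?c3"
        unfolding topple_step_def c3 using i topple_keeps_unstable[of j n i c] j ij by auto
      have cf3: "?c3 \<in> configs n" using st13 cf1 by (rule step_configs)
      obtain e where e: "stabilises_to n ?c3 e" using stabilisation_exists[OF cf3] by blast
      have e1: "stabilises_to n c1 e" using e st13 unfolding stabilises_to_def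
        by (meson converse_rtranclp_into_rtranclp)
      have e2: "stabilises_to n c2 e" using e st23 unfolding stabilises_to_def
        by (meson converse_rtranclp_into_rtranclp)
      have "d1 = e" using less.hyps[OF t1 cf1 s1(2) e1] .
      moreover have "d2 = e" using less.hyps[OF t2 cf2 s2(2) e2] .
      ultimately show ?thesis by simp
    qed
  qed
qed


section \<open>Forbidden subconfigurations\<close>

definition FSC :: "nat \<Rightarrow> (nat \<Rightarrow> nat) \<Rightarrow> nat set \<Rightarrow> bool" where
  "FSC n c S \<longleftrightarrow> S \<noteq> {} \<and> S \<subseteq> {1..n} \<and> (\<forall>i\<in>S. c i < card (nb n i \<inter> S))"

definition noFSC :: "nat \<Rightarrow> (nat \<Rightarrow> nat) \<Rightarrow> bool" where
  "noFSC n c \<longleftrightarrow> \<not> (\<exists>S. FSC n c S)"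

definition good :: "nat \<Rightarrow> (nat \<Rightarrow> nat) \<Rightarrow> bool" where
  "good n c \<longleftrightarrow> stable n c \<and> noFSC n c"

lemma card_insert_nb: "i \<notin> S \<Longrightarrow> card (insert i (nb n j \<inter> S)) = card (nb n j \<inter> S) + 1"
  by simp

lemma topple_noFSC:
  assumes i: "i \<in> {1..n}" and d: "Fn_deg n i \<le> c i" and nf: "noFSC n c"
  shows "noFSC n (topple n i c)"
proof (rule ccontr)
  assume "\<not> noFSC n (topple n i c)"
  then obtain S where S: "S \<noteq> {}" "S \<subseteq> {1..n}" "\<forall>j\<in>S. topple n i c j < card (nb n j \<inter> S)"
    by (auto simp: noFSC_def FSC_def)
  show False
  proof (cases "i \<in> S")
    case False
    have "\<forall>j\<in>S. c j < card (nb n j \<inter> S)"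
    proof
      fix j assume j: "j \<in> S"
      then have "j \<in> {1..n}" "j \<noteq> i" using S False by auto
      then have "c j \<le> topple n i c j" using topple_in[OF i, of j c] by auto
      then show "c j < card (nb n j \<inter> S)" using S(3) j by fastforce
    qed
    then have "FSC n c S" using S unfolding FSC_def by blast
    then show False using nf unfolding noFSC_def by blast
  next
    case True
    show False
    proof (cases "S - {i} = {}")
      case True
      then have "S = {i}" using \<open>i \<in> S\<close> by auto
      then have "topple n i c i < card (nb n i \<inter> {i})" using S(3) by auto
      moreover have "nb n i \<inter> {i} = {}" using nb_irrefl by auto
      ultimately show False by simp
    next
      case False
      let ?S' = "S - {i}"
      have "\<forall>j\<in>?S'. c j < card (nb n j \<inter> ?S')"
      proof
        fix j assume j: "j \<in> ?S'"
        then have jn: "j \<in> {1..n}" "j \<noteq> i" using S by auto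
        have lt: "topple n i c j < card (nb n j \<inter> S)" using S(3) j by auto
        show "c j < card (nb n j \<inter> ?S')"
        proof (cases "j \<in> nb n i")
          case True
          then have "i \<in> nb n j" using nb_sym[OF i] by auto
          then have "nb n j \<inter> S = insert i (nb n j \<inter> ?S')" using \<open>i \<in> S\<close> by auto
          moreover have "card (insert i (nb n j \<inter> ?S')) = card (nb n j \<inter> ?S') + 1"
            by (rule card_insert_nb) simp
          moreover have "topple n i c j = c j + 1" using topple_in[OF i jn(1)] jn True by simp
          ultimately show ?thesis using lt by simp
        next
          case False
          then have "i \<notin> nb n j" using nb_sym[OF jn(1), of i] i by auto
          then have "nb n j \<inter> S = nb n j \<inter> ?S'" by auto
          moreover have "topple n i c j = c j" using topple_in[OF i jn(1)] jn False by simp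
          ultimately show ?thesis using lt by simp
        qed
      qed
      then have "FSC n c ?S'" using S False unfolding FSC_def by blast
      then show False using nf unfolding noFSC_def by blast
    qed
  qed
qed

lemma mono_noFSC:
  assumes "\<forall>j\<in>{1..n}. c j \<le> c' j" "noFSC n c" shows "noFSC n c'"
  using assms unfolding noFSC_def FSC_def by (meson le_less_trans subsetD)

lemma steps_noFSC: "(topple_step n)\<^sup>*\<^sup>* c d \<Longrightarrow> noFSC n c \<Longrightarrow> noFSC n d"
  by (induction rule: rtranclp_induct) (auto simp: topple_step_def intro: topple_noFSC)

lemma chain_good: "chain_step n c d \<Longrightarrow> good n c \<Longrightarrow> good n d"
proof -
  assume cs: "chain_step n c d" and g: "good n c"
  then obtain i where i: "i \<in> {1..n}" "stabilises_to n (c(i := c i + 1)) d"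
    by (auto simp: chain_step_def)
  have "noFSC n (c(i := c i + 1))"
    by (rule mono_noFSC[of n c]) (use g in \<open>auto simp: good_def\<close>)
  then have "noFSC n d" using i(2) steps_noFSC by (auto simp: stabilises_to_def)
  then show "good n d" using i(2) by (auto simp: good_def stabilises_to_def)
qed

lemma chains_good: "(chain_step n)\<^sup>*\<^sup>* c d \<Longrightarrow> good n c \<Longrightarrow> good n d"
  by (induction rule: rtranclp_induct) (auto intro: chain_good)

lemma chains_stable: "(chain_step n)\<^sup>*\<^sup>* c d \<Longrightarrow> stable n c \<Longrightarrow> stable n d"
  by (induction rule: rtranclp_induct) (auto simp: chain_step_def stabilises_to_def)

definition cmax :: "nat \<Rightarrow> nat \<Rightarrow> nat" where
  "cmax n = (\<lambda>i. if i \<in> {1..n} then Fn_deg n i - 1 else 0)"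

lemma cmax_nb: "i \<in> {1..n} \<Longrightarrow> cmax n i = card (nb n i)"
  by (simp add: cmax_def deg_nb)

lemma stable_cmax: "stable n (cmax n)"
proof -
  have "cmax n i < Fn_deg n i" if "i \<in> {1..n}" for i
    using deg_nb[OF that] that by (simp add: cmax_def)
  moreover have "cmax n \<in> configs n" by (simp add: configs_def cmax_def)
  ultimately show ?thesis by (simp add: stable_def)
qed

lemma good_cmax: "good n (cmax n)"
proof -
  have "noFSC n (cmax n)"
    unfolding noFSC_def FSC_def
  proof
    assume "\<exists>S. S \<noteq> {} \<and> S \<subseteq> {1..n} \<and> (\<forall>i\<in>S. cmax n i < card (nb n i \<inter> S))"
    then obtain S i where h: "i \<in> S" "S \<subseteq> {1..n}" "cmax n i < card (nb n i \<inter> S)" by blast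
    have "card (nb n i \<inter> S) \<le> card (nb n i)" by (rule card_mono) auto
    moreover have "cmax n i = card (nb n i)" using h(1,2) by (intro cmax_nb) blast
    ultimately show False using h(3) by simp
  qed
  then show ?thesis using stable_cmax by (simp add: good_def)
qed

lemma stable_le_cmax: "stable n c \<Longrightarrow> c i \<le> cmax n i"
proof (cases "i \<in> {1..n}")
  case True
  assume "stable n c"
  then have "c i < Fn_deg n i" using True by (auto simp: stable_def)
  then show ?thesis using True by (simp add: cmax_def)
next
  case False
  assume "stable n c"
  then have "c i = 0" using False by (auto simp: stable_def configs_def)
  then show ?thesis by simp
qed

lemma to_cmax: "stable n c \<Longrightarrow> (chain_step n)\<^sup>*\<^sup>* c (cmax n)"
proof (induction "tot n (cmax n) - tot n c" arbitrary: c rule: less_induct)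
  case less
  show ?case
  proof (cases "\<forall>i\<in>{1..n}. c i = cmax n i")
    case True
    then have "c = cmax n" using less.prems by (auto simp: stable_def configs_def cmax_def)
    then show ?thesis by simp
  next
    case False
    then obtain i where i: "i \<in> {1..n}" "c i \<noteq> cmax n i" by auto
    then have lt: "c i < cmax n i" using stable_le_cmax[OF less.prems, of i] by simp
    let ?d = "c(i := c i + 1)"
    have sd: "stable n ?d" using less.prems i lt
      by (auto simp: stable_def configs_def cmax_def)
    have cs: "chain_step n c ?d"
      unfolding chain_step_def stabilises_to_def using less.prems sd i by blast
    have le: "?d j \<le> cmax n j" for j using stable_le_cmax[OF sd] .
    have fin: "finite {1..n}" by simp
    have e1: "tot n ?d = ?d i + (\<Sum>j\<in>{1..n}-{i}. ?d j)"
      unfolding tot_def by (rule sum.remove[OF fin i(1)])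
    have e2: "tot n c = c i + (\<Sum>j\<in>{1..n}-{i}. c j)"
      unfolding tot_def by (rule sum.remove[OF fin i(1)])
    have e3: "(\<Sum>j\<in>{1..n}-{i}. ?d j) = (\<Sum>j\<in>{1..n}-{i}. c j)"
      by (rule sum.cong) auto
    have "tot n ?d = tot n c + 1" using e1 e2 e3 by simp
    moreover have "tot n ?d \<le> tot n (cmax n)" unfolding tot_def by (rule sum_mono) (rule le)
    ultimately have "tot n (cmax n) - tot n ?d < tot n (cmax n) - tot n c" by linarith
    then have "(chain_step n)\<^sup>*\<^sup>* ?d (cmax n)" using less.hyps sd by blast
    then show ?thesis using cs by (meson converse_rtranclp_into_rtranclp)
  qed
qed

section \<open>Adding grains commutes with toppling\<close>

lemma topple_add:
  assumes "i \<in> {1..n}" "Fn_deg n i \<le> c i"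
  shows "topple n i (\<lambda>j. c j + x j) = (\<lambda>j. topple n i c j + x j)"
proof
  fix j
  show "topple n i (\<lambda>j. c j + x j) j = topple n i c j + x j"
    unfolding topple_def using assms(2) by simp
qed

lemma step_add: "topple_step n c d \<Longrightarrow> topple_step n (\<lambda>j. c j + x j) (\<lambda>j. d j + x j)"
proof -
  assume "topple_step n c d"
  then obtain i where i: "i \<in> {1..n}" "Fn_deg n i \<le> c i" "d = topple n i c" by (auto simp: topple_step_def)
  then have "(\<lambda>j. d j + x j) = topple n i (\<lambda>j. c j + x j)" using topple_add[of i n c x] i by simp
  moreover have "Fn_deg n i \<le> c i + x i" using i by simp
  ultimately show ?thesis unfolding topple_step_def using i(1) by blast
qed

lemma steps_add: "(topple_step n)\<^sup>*\<^sup>* c d \<Longrightarrow> (topple_step n)\<^sup>*\<^sup>* (\<lambda>j. c j + x j) (\<lambda>j. d j + x j)"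
  by (induction rule: rtranclp_induct) (auto intro: step_add rtranclp.rtrancl_into_rtrancl)


section \<open>Burning\<close>

definition cfg :: "nat \<Rightarrow> (nat \<Rightarrow> nat) \<Rightarrow> nat set \<Rightarrow> nat \<Rightarrow> nat" where
  "cfg n c U = (\<lambda>j. if j \<in> {1..n} then (if j \<in> U then c j + 1 + card (nb n j - U)
                    else c j - card (nb n j \<inter> U)) else 0)"

lemma card_nb_split: "card (nb n j) = card (nb n j \<inter> U) + card (nb n j - U)"
proof -
  have "nb n j = (nb n j \<inter> U) \<union> (nb n j - U)" by auto
  then have "card (nb n j) = card ((nb n j \<inter> U) \<union> (nb n j - U))" by simp
  also have "\<dots> = card (nb n j \<inter> U) + card (nb n j - U)"
    by (rule card_Un_disjoint) auto
  finally show ?thesis .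
qed

lemma burn_step:
  assumes U: "U \<subseteq> {1..n}" and inv: "\<forall>k\<in>{1..n}-U. card (nb n k \<inter> U) \<le> c k"
    and j: "j \<in> U" and cj: "card (nb n j \<inter> U) \<le> c j"
  shows "topple_step n (cfg n c U) (cfg n c (U - {j}))"
proof -
  have jn: "j \<in> {1..n}" using U j by auto
  have deg: "Fn_deg n j = card (nb n j \<inter> U) + card (nb n j - U) + 1"
    using deg_nb[OF jn] card_nb_split[of n j U] by simp
  have cj': "cfg n c U j = c j + 1 + card (nb n j - U)" using jn j by (simp add: cfg_def)
  have dle: "Fn_deg n j \<le> cfg n c U j" using deg cj' cj by simp
  have "topple n j (cfg n c U) = cfg n c (U - {j})"
  proof
    fix k
    show "topple n j (cfg n c U) k = cfg n c (U - {j}) k"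
    proof (cases "k \<in> {1..n}")
      case False
      have "cfg n c U k = 0" "cfg n c (U - {j}) k = 0" unfolding cfg_def by (simp_all only: if_not_P[OF False])
      then show ?thesis using topple_out[OF jn False] by simp
    next
      case kn: True
      have t: "topple n j (cfg n c U) k = (if k = j then cfg n c U j - Fn_deg n j
               else if k \<in> nb n j then cfg n c U k + 1 else cfg n c U k)"
        by (rule topple_in[OF jn kn])
      show ?thesis
      proof (cases "k = j")
        case True
        have "nb n j \<inter> (U - {j}) = nb n j \<inter> U" using nb_irrefl[of j n] by auto
        then show ?thesis using t True cj' deg jn by (simp add: cfg_def)
      next
        case kj: False
        show ?thesis
        proof (cases "k \<in> nb n j")
          case True
          then have jk: "j \<in> nb n k" using nb_sym[OF jn] by auto
          show ?thesis
          proof (cases "k \<in> U")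
            case True
            have "nb n k - (U - {j}) = insert j (nb n k - U)" using jk j by auto
            moreover have "j \<notin> nb n k - U" using j by auto
            ultimately have "card (nb n k - (U - {j})) = card (nb n k - U) + 1" by simp
            then show ?thesis using t kj \<open>k \<in> nb n j\<close> True kn by (simp add: cfg_def)
          next
            case False
            have "nb n k \<inter> U = insert j (nb n k \<inter> (U - {j}))" using jk j by auto
            moreover have "j \<notin> nb n k \<inter> (U - {j})" by auto
            ultimately have e: "card (nb n k \<inter> U) = card (nb n k \<inter> (U - {j})) + 1" by simp
            have "card (nb n k \<inter> U) \<le> c k" using inv kn False by auto
            then show ?thesis using t kj \<open>k \<in> nb n j\<close> False kn e by (simp add: cfg_def)
          qed
        next
          case False
          then have "j \<notin> nb n k" using nb_sym[OF kn, of j] jn by auto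
          then have "nb n k \<inter> (U - {j}) = nb n k \<inter> U" "nb n k - (U - {j}) = nb n k - U" by auto
          then show ?thesis using t kj False kn by (simp add: cfg_def)
        qed
      qed
    qed
  qed
  then show ?thesis unfolding topple_step_def using jn dle by metis
qed

lemma burn:
  assumes c: "c \<in> configs n" and nf: "noFSC n c"
  shows "U \<subseteq> {1..n} \<Longrightarrow> (\<forall>k\<in>{1..n}-U. card (nb n k \<inter> U) \<le> c k) \<Longrightarrow> (topple_step n)\<^sup>*\<^sup>* (cfg n c U) c"
proof (induction "card U" arbitrary: U rule: less_induct)
  case less
  show ?case
  proof (cases "U = {}")
    case True
    have "cfg n c U = c"
    proof
      fix j show "cfg n c U j = c j" using True c by (auto simp: cfg_def configs_def)
    qed
    then show ?thesis by simp
  next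
    case False
    then have "\<not> FSC n c U" using nf by (auto simp: noFSC_def)
    then obtain j where j: "j \<in> U" "\<not> c j < card (nb n j \<inter> U)"
      using False less.prems(1) unfolding FSC_def by blast
    then have cj: "card (nb n j \<inter> U) \<le> c j" by simp
    have st: "topple_step n (cfg n c U) (cfg n c (U - {j}))"
      by (rule burn_step[OF less.prems j(1) cj])
    have finU: "finite U" using less.prems(1) by (rule finite_subset) simp
    have lt: "card (U - {j}) < card U" by (rule card_Diff1_less[OF finU j(1)])
    have sub: "U - {j} \<subseteq> {1..n}" using less.prems(1) by auto
    have inv: "\<forall>k\<in>{1..n}-(U - {j}). card (nb n k \<inter> (U - {j})) \<le> c k"
    proof
      fix k assume k: "k \<in> {1..n}-(U - {j})"
      have "card (nb n k \<inter> (U - {j})) \<le> card (nb n k \<inter> U)" by (rule card_mono) auto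
      moreover have "card (nb n k \<inter> U) \<le> c k" using k less.prems(2) cj by (cases "k = j") auto
      ultimately show "card (nb n k \<inter> (U - {j})) \<le> c k" by simp
    qed
    have "(topple_step n)\<^sup>*\<^sup>* (cfg n c (U - {j})) c" using less.hyps[OF lt sub inv] .
    then show ?thesis using st by (meson converse_rtranclp_into_rtranclp)
  qed
qed

definition beta :: "nat \<Rightarrow> nat \<Rightarrow> nat" where
  "beta n j = (if j \<in> {1..n} then 1 else 0)"

lemma burn_all:
  assumes c: "c \<in> configs n" and nf: "noFSC n c"
  shows "(topple_step n)\<^sup>*\<^sup>* (\<lambda>j. c j + beta n j) c"
proof -
  have "cfg n c {1..n} = (\<lambda>j. c j + beta n j)"
  proof
    fix j
    have "nb n j - {1..n} = {}" using nb_sub by blast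
    then show "cfg n c {1..n} j = c j + beta n j" using c by (auto simp: cfg_def beta_def configs_def)
  qed
  moreover have "(topple_step n)\<^sup>*\<^sup>* (cfg n c {1..n}) c" by (rule burn[OF c nf]) auto
  ultimately show ?thesis by simp
qed

lemma burn_m:
  assumes c: "c \<in> configs n" and nf: "noFSC n c"
  shows "(topple_step n)\<^sup>*\<^sup>* (\<lambda>j. c j + m * beta n j) c"
proof (induction m)
  case 0 then show ?case by simp
next
  case (Suc m)
  have "(topple_step n)\<^sup>*\<^sup>* (\<lambda>j. (c j + beta n j) + m * beta n j) (\<lambda>j. c j + m * beta n j)"
    using steps_add[OF burn_all[OF c nf], of "\<lambda>j. m * beta n j"] by simp
  moreover have "(\<lambda>j. (c j + beta n j) + m * beta n j) = (\<lambda>j. c j + Suc m * beta n j)" by auto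
  ultimately show ?case using Suc.IH by (metis rtranclp_trans)
qed

section \<open>Reaching every good configuration from the maximal one\<close>

lemma tot_dec:
  assumes i: "i \<in> {1..n}" and x: "0 < x i"
  shows "tot n (x(i := x i - 1)) < tot n x"
proof -
  have fin: "finite {1..n}" by simp
  have e1: "tot n (x(i := x i - 1)) = (x i - 1) + (\<Sum>j\<in>{1..n}-{i}. (x(i := x i - 1)) j)"
    unfolding tot_def using sum.remove[OF fin i, of "x(i := x i - 1)"] by simp
  have e2: "tot n x = x i + (\<Sum>j\<in>{1..n}-{i}. x j)"
    unfolding tot_def by (rule sum.remove[OF fin i])
  have e3: "(\<Sum>j\<in>{1..n}-{i}. (x(i := x i - 1)) j) = (\<Sum>j\<in>{1..n}-{i}. x j)"
    by (rule sum.cong) auto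
  show ?thesis using e1 e2 e3 x by simp
qed

lemma chain_from:
  "stable n s \<Longrightarrow> x \<in> configs n \<Longrightarrow> \<exists>d. (chain_step n)\<^sup>*\<^sup>* s d \<and> stabilises_to n (\<lambda>j. s j + x j) d"
proof (induction "tot n x" arbitrary: s x rule: less_induct)
  case less
  show ?case
  proof (cases "\<forall>j\<in>{1..n}. x j = 0")
    case True
    have "(\<lambda>j. s j + x j) = s"
    proof
      fix j show "s j + x j = s j" using True less.prems(2) by (cases "j \<in> {1..n}") (auto simp: configs_def)
    qed
    then show ?thesis using less.prems(1) unfolding stabilises_to_def by auto
  next
    case False
    then obtain i where i: "i \<in> {1..n}" "0 < x i" by auto
    let ?s1 = "s(i := s i + 1)"
    have s1c: "?s1 \<in> configs n" using less.prems(1) i(1) by (auto simp: stable_def configs_def)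
    obtain s' where s': "stabilises_to n ?s1 s'" using stabilisation_exists[OF s1c] by blast
    have cs: "chain_step n s s'" unfolding chain_step_def using less.prems(1) i(1) s' by blast
    let ?x' = "x(i := x i - 1)"
    have x'c: "?x' \<in> configs n" using less.prems(2) by (auto simp: configs_def)
    have lt: "tot n ?x' < tot n x" using tot_dec[of i n x] i by simp
    have ss': "stable n s'" using s' by (simp add: stabilises_to_def)
    obtain d where d: "(chain_step n)\<^sup>*\<^sup>* s' d" "stabilises_to n (\<lambda>j. s' j + ?x' j) d"
      using less.hyps[OF lt ss' x'c] by blast
    have eq: "(\<lambda>j. s j + x j) = (\<lambda>j. ?s1 j + ?x' j)" using i(2) by auto
    have "(topple_step n)\<^sup>*\<^sup>* (\<lambda>j. ?s1 j + ?x' j) (\<lambda>j. s' j + ?x' j)"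
      using steps_add[of n ?s1 s' ?x'] s' by (simp add: stabilises_to_def)
    then have "stabilises_to n (\<lambda>j. s j + x j) d" using d(2) eq
      unfolding stabilises_to_def by (metis rtranclp_trans)
    moreover have "(chain_step n)\<^sup>*\<^sup>* s d" using cs d(1) by (meson converse_rtranclp_into_rtranclp)
    ultimately show ?thesis by blast
  qed
qed

lemma cmax_le2: "cmax n j \<le> 2"
proof (cases "j \<in> {1..n}")
  case True then show ?thesis using card_nb_le2[OF True] cmax_nb[OF True] by simp
next
  case False then have "cmax n j = 0" unfolding cmax_def by (simp only: if_not_P[OF False] if_False)
  then show ?thesis by simp
qed

lemma from_cmax:
  assumes g: "good n c"
  shows "(chain_step n)\<^sup>*\<^sup>* (cmax n) c"
proof -
  have cc: "c \<in> configs n" and nf: "noFSC n c" and sc: "stable n c" using g by (auto simp: good_def stable_def)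
  let ?x = "\<lambda>j. if j \<in> {1..n} then c j + 2 - cmax n j else 0"
  have xc: "?x \<in> configs n" by (simp add: configs_def)
  obtain d where d: "(chain_step n)\<^sup>*\<^sup>* (cmax n) d" "stabilises_to n (\<lambda>j. cmax n j + ?x j) d"
    using chain_from[OF stable_cmax xc] by blast
  have eq: "(\<lambda>j. cmax n j + ?x j) = (\<lambda>j. c j + 2 * beta n j)"
  proof
    fix j
    show "cmax n j + ?x j = c j + 2 * beta n j"
      using cmax_le2[of n j] cc by (auto simp: beta_def configs_def cmax_def)
  qed
  have "stabilises_to n (\<lambda>j. c j + 2 * beta n j) c"
    using burn_m[OF cc nf, of 2] sc by (simp add: stabilises_to_def)
  moreover have "(\<lambda>j. c j + 2 * beta n j) \<in> configs n" using cc by (auto simp: configs_def beta_def)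
  ultimately have "d = c" using stabilisation_unique d(2) eq by metis
  then show ?thesis using d(1) by simp
qed

theorem recurrent_iff_good: "ASM_recurrent n c \<longleftrightarrow> good n c"
proof
  assume r: "ASM_recurrent n c"
  then have sc: "stable n c" by (simp add: ASM_recurrent_def)
  have "(chain_step n)\<^sup>*\<^sup>* c (cmax n)" by (rule to_cmax[OF sc])
  then have "(chain_step n)\<^sup>*\<^sup>* (cmax n) c" using r by (simp add: ASM_recurrent_def)
  then show "good n c" using good_cmax chains_good by blast
next
  assume g: "good n c"
  then have sc: "stable n c" by (simp add: good_def)
  have "(chain_step n)\<^sup>*\<^sup>* d c" if "(chain_step n)\<^sup>*\<^sup>* c d" for d
  proof -
    have "stable n d" using chains_stable that sc by blast
    then have "(chain_step n)\<^sup>*\<^sup>* d (cmax n)" by (rule to_cmax)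
    then show ?thesis using from_cmax[OF g] by (metis rtranclp_trans)
  qed
  then show "ASM_recurrent n c" using sc by (simp add: ASM_recurrent_def)
qed


section \<open>Explicit description of recurrent configurations\<close>

definition bad :: "nat \<Rightarrow> (nat \<Rightarrow> nat) \<Rightarrow> bool" where
  "bad m c \<longleftrightarrow> (\<exists>a b. 1 \<le> a \<and> a < b \<and> b \<le> m \<and> c a = 0 \<and> c b = 0 \<and> (\<forall>t. a < t \<and> t < b \<longrightarrow> c t \<noteq> 2))"

lemma nb_mem: "i \<in> {1..n} \<Longrightarrow> j \<in> nb n i \<longleftrightarrow> j \<in> {1..n} \<and> (j = i + 1 \<or> i = j + 1)"
  by (simp add: nb_char)

lemma card_ge1: "x \<in> A \<Longrightarrow> finite A \<Longrightarrow> 1 \<le> card A"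
proof -
  assume "x \<in> A" "finite A"
  then have "0 < card A" using card_gt_0_iff by blast
  then show ?thesis by simp
qed

lemma FSC_bad:
  assumes S: "FSC n c S" and c2: "\<forall>i\<in>{1..n}. c i \<le> 2"
  shows "bad n c"
proof -
  from S have Sne: "S \<noteq> {}" and Ssub: "S \<subseteq> {1..n}" and Sc: "\<forall>i\<in>S. c i < card (nb n i \<inter> S)"
    by (auto simp: FSC_def)
  have finS: "finite S" using Ssub by (rule finite_subset) simp
  define a where "a = Min S"
  have aS: "a \<in> S" using finS Sne by (simp add: a_def)
  have amin: "\<And>s. s \<in> S \<Longrightarrow> a \<le> s" using finS by (simp add: a_def)
  have an: "a \<in> {1..n}" using aS Ssub by auto
  have "0 < card (nb n a \<inter> S)" using Sc aS by fastforce
  then obtain j where j: "j \<in> nb n a" "j \<in> S" by (metis card_gt_0_iff disjoint_iff_not_equal inf_bot_right)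
  have "\<not> (a = j + 1)" using amin[OF j(2)] by auto
  then have a1: "a + 1 \<in> S" using j nb_mem[OF an] by auto
  have nba: "nb n a \<inter> S \<subseteq> {a + 1}"
  proof
    fix x assume x: "x \<in> nb n a \<inter> S"
    then have "x = a + 1 \<or> a = x + 1" using nb_mem[OF an] by auto
    moreover have "a \<le> x" using amin x by auto
    ultimately show "x \<in> {a + 1}" by auto
  qed
  have "card (nb n a \<inter> S) \<le> 1" using card_mono[OF _ nba] by simp
  then have ca: "c a = 0" using Sc aS by fastforce
  define M where "M = {m. a \<le> m \<and> {a..m} \<subseteq> S}"
  have finM: "finite M"
  proof -
    have "M \<subseteq> {a..n}"
    proof
      fix x assume "x \<in> M"
      then have "a \<le> x" "x \<in> S" by (auto simp: M_def)
      then show "x \<in> {a..n}" using Ssub by auto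
    qed
    then show ?thesis by (rule finite_subset) simp
  qed
  have a1M: "a + 1 \<in> M" using aS a1 by (auto simp: M_def le_Suc_eq)
  define b where "b = Max M"
  have bM: "b \<in> M" unfolding b_def using finM a1M by (intro Max_in) auto
  have ab: "a + 1 \<le> b" using finM a1M by (simp add: b_def)
  have abS: "{a..b} \<subseteq> S" using bM by (simp add: M_def)
  have bS: "b \<in> S" using abS ab by auto
  have bn: "b \<in> {1..n}" using bS Ssub by auto
  have b1: "b + 1 \<notin> S"
  proof
    assume "b + 1 \<in> S"
    then have "{a..b+1} \<subseteq> S" using abS by (auto simp: le_Suc_eq)
    then have "b + 1 \<in> M" using ab by (simp add: M_def)
    then have "b + 1 \<le> b" using finM by (simp add: b_def)
    then show False by simp
  qed
  have nbb: "nb n b \<inter> S \<subseteq> {b - 1}"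
  proof
    fix x assume x: "x \<in> nb n b \<inter> S"
    then have "x = b + 1 \<or> b = x + 1" using nb_mem[OF bn] by auto
    then show "x \<in> {b - 1}" using x b1 by auto
  qed
  have "card (nb n b \<inter> S) \<le> 1" using card_mono[OF _ nbb] by simp
  then have cb: "c b = 0" using Sc bS by fastforce
  have mid: "c t \<noteq> 2" if t: "a < t" "t < b" for t
  proof -
    have tS: "t \<in> S" using abS t by auto
    have tn: "t \<in> {1..n}" using tS Ssub by auto
    have "card (nb n t \<inter> S) \<le> card (nb n t)" by (rule card_mono) auto
    also have "\<dots> \<le> 2" by (rule card_nb_le2[OF tn])
    finally show ?thesis using Sc tS by fastforce
  qed
  show ?thesis unfolding bad_def
    using an bn ab ca cb mid by (intro exI[of _ a] exI[of _ b]) auto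
qed

lemma bad_FSC:
  assumes B: "bad n c" and c2: "\<forall>i\<in>{1..n}. c i \<le> 2"
  shows "\<exists>S. FSC n c S"
proof -
  from B obtain a b where ab: "1 \<le> a" "a < b" "b \<le> n" "c a = 0" "c b = 0" "\<forall>t. a < t \<and> t < b \<longrightarrow> c t \<noteq> 2"
    unfolding bad_def by blast
  let ?S = "{a..b}"
  have "\<forall>i\<in>?S. c i < card (nb n i \<inter> ?S)"
  proof
    fix i assume i: "i \<in> ?S"
    have inn: "i \<in> {1..n}" using i ab by auto
    have fin: "finite (nb n i \<inter> ?S)" by simp
    show "c i < card (nb n i \<inter> ?S)"
    proof (cases "i = a")
      case True
      have "a + 1 \<in> nb n i \<inter> ?S" using True ab inn nb_mem[OF inn] by auto
      then have "1 \<le> card (nb n i \<inter> ?S)" using fin by (rule card_ge1)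
      then show ?thesis using True ab(4) by simp
    next
      case False
      show ?thesis
      proof (cases "i = b")
        case True
        have "b - 1 \<in> nb n i \<inter> ?S" using True ab inn nb_mem[OF inn] by auto
        then have "1 \<le> card (nb n i \<inter> ?S)" using fin by (rule card_ge1)
        then show ?thesis using True ab(5) by simp
      next
        case False
        have ai: "a < i" "i < b" using i \<open>i \<noteq> a\<close> False by auto
        have "{i - 1, i + 1} \<subseteq> nb n i \<inter> ?S" using ai ab inn nb_mem[OF inn] by auto
        then have "card {i - 1, i + 1} \<le> card (nb n i \<inter> ?S)" by (rule card_mono[OF fin])
        moreover have "card {i - 1, i + 1} = 2" using ai ab by simp
        moreover have "c i \<le> 1"
        proof -
          have "c i \<noteq> 2" using ab(6) ai by blast
          moreover have "c i \<le> 2" using c2 inn by blast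
          ultimately show ?thesis by simp
        qed
        ultimately show ?thesis by simp
      qed
    qed
  qed
  moreover have "?S \<noteq> {}" "?S \<subseteq> {1..n}" using ab by auto
  ultimately have "FSC n c ?S" unfolding FSC_def by blast
  then show ?thesis by blast
qed

lemma noFSC_iff_bad: "\<forall>i\<in>{1..n}. c i \<le> 2 \<Longrightarrow> noFSC n c \<longleftrightarrow> \<not> bad n c"
  using FSC_bad bad_FSC unfolding noFSC_def by blast

lemma nb_1: "2 \<le> n \<Longrightarrow> nb n 1 = {2}"
  by (auto simp: nb_char)
lemma nb_n: "2 \<le> n \<Longrightarrow> nb n n = {n - 1}"
  by (auto simp: nb_char)
lemma nb_mid: "1 < i \<Longrightarrow> i < n \<Longrightarrow> nb n i = {i - 1, i + 1}"
  by (auto simp: nb_char)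

lemma stable_iff:
  assumes n2: "2 \<le> n"
  shows "stable n c \<longleftrightarrow> c \<in> configs n \<and> (\<forall>i\<in>{1..n}. c i \<le> 2) \<and> c 1 \<le> 1 \<and> c n \<le> 1"
proof
  assume s: "stable n c"
  then have cc: "c \<in> configs n" and lt: "\<forall>i\<in>{1..n}. c i < Fn_deg n i" by (auto simp: stable_def)
  have "c i \<le> 2" if "i \<in> {1..n}" for i using lt that deg_le3[OF that] by fastforce
  moreover have "c 1 \<le> 1"
  proof -
    have i1: "1 \<in> {1..n}" using n2 by simp
    have "c 1 < Fn_deg n 1" using lt i1 by blast
    moreover have "Fn_deg n 1 = 2" using deg_nb[OF i1] nb_1[OF n2] by simp
    ultimately show ?thesis by simp
  qed
  moreover have "c n \<le> 1"
  proof -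
    have i1: "n \<in> {1..n}" using n2 by simp
    have "c n < Fn_deg n n" using lt i1 by blast
    moreover have "Fn_deg n n = 2" using deg_nb[OF i1] nb_n[OF n2] by simp
    ultimately show ?thesis by simp
  qed
  ultimately show "c \<in> configs n \<and> (\<forall>i\<in>{1..n}. c i \<le> 2) \<and> c 1 \<le> 1 \<and> c n \<le> 1" using cc by auto
next
  assume h: "c \<in> configs n \<and> (\<forall>i\<in>{1..n}. c i \<le> 2) \<and> c 1 \<le> 1 \<and> c n \<le> 1"
  have "c i < Fn_deg n i" if i: "i \<in> {1..n}" for i
  proof -
    consider "i = 1" | "i = n" | "1 < i \<and> i < n" using i by fastforce
    then show ?thesis
    proof cases
      case 1 then show ?thesis using h deg_nb[OF i] nb_1[OF n2] by auto
    next
      case 2 then show ?thesis using h deg_nb[OF i] nb_n[OF n2] by auto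
    next
      case 3
      then have "card (nb n i) = 2" using nb_mid[of i n] by (auto simp: card_insert_if)
      moreover have "c i \<le> 2" using h i by blast
      ultimately show ?thesis using deg_nb[OF i] by simp
    qed
  qed
  then show "stable n c" using h by (auto simp: stable_def)
qed

definition PP :: "nat \<Rightarrow> (nat \<Rightarrow> nat) set" where
  "PP m = {c \<in> configs m. (\<forall>i\<in>{1..m}. c i \<le> 2) \<and> c 1 \<le> 1 \<and> \<not> bad m c}"

lemma good_iff_PP:
  assumes n2: "2 \<le> n"
  shows "good n c \<longleftrightarrow> c \<in> PP n \<and> c n \<le> 1"
  unfolding good_def stable_iff[OF n2] PP_def using noFSC_iff_bad by blast


section \<open>Counting recurrent configurations\<close>

definition armed :: "nat \<Rightarrow> (nat \<Rightarrow> nat) \<Rightarrow> bool" where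
  "armed m c \<longleftrightarrow> (\<exists>a. 1 \<le> a \<and> a \<le> m \<and> c a = 0 \<and> (\<forall>t. a < t \<and> t \<le> m \<longrightarrow> c t \<noteq> 2))"

lemma finite_PP: "finite (PP m)"
proof -
  have "PP m \<subseteq> {f. \<forall>x. (x \<in> {1..m} \<longrightarrow> f x \<in> {0..2}) \<and> (x \<notin> {1..m} \<longrightarrow> f x = 0)}"
    by (auto simp: PP_def configs_def)
  moreover have "finite {f. \<forall>x. (x \<in> {1..m} \<longrightarrow> f x \<in> {0..2::nat}) \<and> (x \<notin> {1..m} \<longrightarrow> f x = 0)}"
    by (rule finite_set_of_finite_funs) auto
  ultimately show ?thesis by (rule finite_subset)
qed

context
  fixes m :: nat and c :: "nat \<Rightarrow> nat" and v :: nat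
  assumes m1: "1 \<le> m"
begin

lemma E1: "j \<le> m \<Longrightarrow> (c(Suc m := v)) j = c j" by simp

lemma E2: "bad (Suc m) (c(Suc m := v)) \<longleftrightarrow> bad m c \<or> (v = 0 \<and> armed m c)"
proof
  assume "bad (Suc m) (c(Suc m := v))"
  then obtain a b where ab: "1 \<le> a" "a < b" "b \<le> Suc m" "(c(Suc m := v)) a = 0" "(c(Suc m := v)) b = 0"
    "\<forall>t. a < t \<and> t < b \<longrightarrow> (c(Suc m := v)) t \<noteq> 2" unfolding bad_def by blast
  show "bad m c \<or> (v = 0 \<and> armed m c)"
  proof (cases "b = Suc m")
    case True
    then have "v = 0" using ab(5) by simp
    moreover have "armed m c"
    proof -
      have "\<forall>t. a < t \<and> t \<le> m \<longrightarrow> c t \<noteq> 2"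
      proof (intro allI impI)
        fix t assume t: "a < t \<and> t \<le> m"
        then have "(c(Suc m := v)) t \<noteq> 2" using ab(6) True by simp
        then show "c t \<noteq> 2" using t by simp
      qed
      moreover have "1 \<le> a" "a \<le> m" "c a = 0" using ab True by auto
      ultimately show ?thesis unfolding armed_def by blast
    qed
    ultimately show ?thesis by simp
  next
    case False
    then have bm: "b \<le> m" using ab(3) by simp
    have "bad m c"
    proof -
      have "\<forall>t. a < t \<and> t < b \<longrightarrow> c t \<noteq> 2"
      proof (intro allI impI)
        fix t assume t: "a < t \<and> t < b"
        then have "(c(Suc m := v)) t \<noteq> 2" using ab(6) by simp
        then show "c t \<noteq> 2" using t bm by simp
      qed
      moreover have "1 \<le> a" "a < b" "b \<le> m" "c a = 0" "c b = 0" using ab bm by auto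
      ultimately show ?thesis unfolding bad_def by blast
    qed
    then show ?thesis by simp
  qed
next
  assume "bad m c \<or> (v = 0 \<and> armed m c)"
  then show "bad (Suc m) (c(Suc m := v))"
  proof
    assume "bad m c"
    then obtain a b where ab: "1 \<le> a" "a < b" "b \<le> m" "c a = 0" "c b = 0"
      "\<forall>t. a < t \<and> t < b \<longrightarrow> c t \<noteq> 2" unfolding bad_def by blast
    have "\<forall>t. a < t \<and> t < b \<longrightarrow> (c(Suc m := v)) t \<noteq> 2" using ab by auto
    moreover have "1 \<le> a" "a < b" "b \<le> Suc m" "(c(Suc m := v)) a = 0" "(c(Suc m := v)) b = 0" using ab by auto
    ultimately show ?thesis unfolding bad_def by blast
  next
    assume h: "v = 0 \<and> armed m c"
    then obtain a where a: "1 \<le> a" "a \<le> m" "c a = 0" "\<forall>t. a < t \<and> t \<le> m \<longrightarrow> c t \<noteq> 2"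
      unfolding armed_def by blast
    have "\<forall>t. a < t \<and> t < Suc m \<longrightarrow> (c(Suc m := v)) t \<noteq> 2" using a by auto
    moreover have "1 \<le> a" "a < Suc m" "Suc m \<le> Suc m" "(c(Suc m := v)) a = 0" "(c(Suc m := v)) (Suc m) = 0"
      using a h by auto
    ultimately show ?thesis unfolding bad_def by blast
  qed
qed

lemma E3: "armed (Suc m) (c(Suc m := v)) \<longleftrightarrow> v = 0 \<or> (v \<noteq> 2 \<and> armed m c)"
proof
  assume "armed (Suc m) (c(Suc m := v))"
  then obtain a where a: "1 \<le> a" "a \<le> Suc m" "(c(Suc m := v)) a = 0"
    "\<forall>t. a < t \<and> t \<le> Suc m \<longrightarrow> (c(Suc m := v)) t \<noteq> 2" unfolding armed_def by blast
  show "v = 0 \<or> (v \<noteq> 2 \<and> armed m c)"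
  proof (cases "a = Suc m")
    case True then show ?thesis using a(3) by simp
  next
    case False
    then have am: "a \<le> m" using a(2) by simp
    have "v \<noteq> 2" using a(4)[rule_format, of "Suc m"] am by simp
    moreover have "armed m c"
    proof -
      have "\<forall>t. a < t \<and> t \<le> m \<longrightarrow> c t \<noteq> 2"
      proof (intro allI impI)
        fix t assume t: "a < t \<and> t \<le> m"
        then have "(c(Suc m := v)) t \<noteq> 2" using a(4) by auto
        then show "c t \<noteq> 2" using t by auto
      qed
      moreover have "1 \<le> a" "a \<le> m" "c a = 0" using a am by auto
      ultimately show ?thesis unfolding armed_def by blast
    qed
    ultimately show ?thesis by simp
  qed
next
  assume h: "v = 0 \<or> (v \<noteq> 2 \<and> armed m c)"
  show "armed (Suc m) (c(Suc m := v))"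
  proof (cases "v = 0")
    case True
    show ?thesis unfolding armed_def using True by (intro exI[of _ "Suc m"]) auto
  next
    case False
    then have v2: "v \<noteq> 2" and ar: "armed m c" using h by auto
    then obtain a where a: "1 \<le> a" "a \<le> m" "c a = 0" "\<forall>t. a < t \<and> t \<le> m \<longrightarrow> c t \<noteq> 2"
      unfolding armed_def by blast
    have "\<forall>t. a < t \<and> t \<le> Suc m \<longrightarrow> (c(Suc m := v)) t \<noteq> 2"
    proof (intro allI impI)
      fix t assume t: "a < t \<and> t \<le> Suc m"
      show "(c(Suc m := v)) t \<noteq> 2"
      proof (cases "t = Suc m")
        case True then show ?thesis using v2 by simp
      next
        case False then show ?thesis using t a(4) by auto
      qed
    qed
    moreover have "1 \<le> a" "a \<le> Suc m" "(c(Suc m := v)) a = 0" using a by auto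
    ultimately show ?thesis unfolding armed_def by blast
  qed
qed

lemma E4: "tot (Suc m) (c(Suc m := v)) = tot m c + v"
proof -
  have "tot (Suc m) (c(Suc m := v)) = tot m (c(Suc m := v)) + v"
    unfolding tot_def by simp
  moreover have "tot m (c(Suc m := v)) = tot m c"
    unfolding tot_def by (rule sum.cong) auto
  ultimately show ?thesis by simp
qed

lemma E5:
  assumes cc: "c \<in> configs m"
  shows "c(Suc m := v) \<in> PP (Suc m) \<longleftrightarrow> c \<in> PP m \<and> v \<le> 2 \<and> \<not> (v = 0 \<and> armed m c)"
proof -
  have cf: "c(Suc m := v) \<in> configs (Suc m)" using cc by (auto simp: configs_def)
  have vals: "(\<forall>i\<in>{1..Suc m}. (c(Suc m := v)) i \<le> 2) \<longleftrightarrow> (\<forall>i\<in>{1..m}. c i \<le> 2) \<and> v \<le> 2"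
    by (auto simp: le_Suc_eq)
  have one: "(c(Suc m := v)) 1 = c 1" using m1 by simp
  show ?thesis unfolding PP_def using cf cc vals one E2 by auto
qed

end

lemma decomp_fun:
  assumes "c' \<in> configs (Suc m)"
  shows "c'(Suc m := 0) \<in> configs m" "c' = (c'(Suc m := 0))(Suc m := c' (Suc m))"
  using assms by (auto simp: configs_def le_Suc_eq)

lemma PP_Suc_sum:
  assumes m1: "1 \<le> m"
  shows "(\<Sum>c'\<in>{c'\<in>PP (Suc m). R c'}. f c') =
         (\<Sum>v\<in>{0,1,2::nat}. \<Sum>c\<in>{c\<in>PP m. \<not> (v = 0 \<and> armed m c) \<and> R (c(Suc m := v))}. f (c(Suc m := v)))"
proof -
  let ?Sig = "SIGMA v:{0,1,2::nat}. {c\<in>PP m. \<not> (v = 0 \<and> armed m c) \<and> R (c(Suc m := v))}"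
  let ?h = "\<lambda>(v, c). c(Suc m := v)"
  have finSig: "finite ?Sig" by (rule finite_SigmaI) (auto intro: finite_subset[OF _ finite_PP])
  have inj: "inj_on ?h ?Sig"
  proof (rule inj_onI)
    fix x y assume hx: "x \<in> ?Sig" and hy: "y \<in> ?Sig" and hxy: "?h x = ?h y"
    obtain v c where x: "x = (v, c)" by (cases x)
    obtain v' c' where y: "y = (v', c')" by (cases y)
    have h3: "c(Suc m := v) = c'(Suc m := v')" using hxy x y by simp
    have cc: "c \<in> configs m" "c' \<in> configs m" using hx hy x y by (auto simp: PP_def)
    have "v = v'" using fun_cong[OF h3, of "Suc m"] by simp
    moreover have "c = c'"
    proof
      fix j show "c j = c' j"
      proof (cases "j = Suc m")
        case True
        then show ?thesis using cc by (auto simp: configs_def)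
      next
        case False then show ?thesis using fun_cong[OF h3, of j] by simp
      qed
    qed
    ultimately show "x = y" using x y by simp
  qed
  have img: "?h ` ?Sig = {c'\<in>PP (Suc m). R c'}"
  proof (intro equalityI subsetI)
    fix x assume "x \<in> ?h ` ?Sig"
    then obtain v c where x: "x = c(Suc m := v)" and vc: "(v, c) \<in> ?Sig" by auto
    have "c \<in> configs m" using vc by (auto simp: PP_def)
    then show "x \<in> {c'\<in>PP (Suc m). R c'}" using E5[OF m1, of c v] vc x by auto
  next
    fix x assume x: "x \<in> {c'\<in>PP (Suc m). R c'}"
    then have xc: "x \<in> configs (Suc m)" by (auto simp: PP_def)
    let ?c = "x(Suc m := 0)" and ?v = "x (Suc m)"
    have d: "?c \<in> configs m" "x = ?c(Suc m := ?v)" by (rule decomp_fun[OF xc])+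
    then have "?c \<in> PP m \<and> ?v \<le> 2 \<and> \<not> (?v = 0 \<and> armed m ?c)" using E5[OF m1 d(1), of ?v] x by auto
    then have "(?v, ?c) \<in> ?Sig" using x d(2) by auto
    then show "x \<in> ?h ` ?Sig" using d(2) by (intro image_eqI[of _ _ "(?v, ?c)"]) auto
  qed
  have "(\<Sum>c'\<in>{c'\<in>PP (Suc m). R c'}. f c') = (\<Sum>x\<in>?Sig. f (?h x))"
    unfolding img[symmetric] by (subst sum.reindex[OF inj]) (simp add: comp_def)
  also have "\<dots> = (\<Sum>v\<in>{0,1,2::nat}. \<Sum>c\<in>{c\<in>PP m. \<not> (v = 0 \<and> armed m c) \<and> R (c(Suc m := v))}. f (c(Suc m := v)))"
  proof -
    have "(\<Sum>x\<in>?Sig. f (?h x)) = (\<Sum>x\<in>?Sig. case x of (v, c) \<Rightarrow> f (c(Suc m := v)))"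
      by (rule sum.cong) auto
    also have "\<dots> = (\<Sum>v\<in>{0,1,2::nat}. \<Sum>c\<in>{c\<in>PP m. \<not> (v = 0 \<and> armed m c) \<and> R (c(Suc m := v))}. f (c(Suc m := v)))"
      by (rule sum.Sigma[symmetric]) (auto intro: finite_subset[OF _ finite_PP])
    finally show ?thesis .
  qed
  finally show ?thesis .
qed


lemma PP_decomp:
  assumes m1: "1 \<le> m" and c': "c' \<in> PP (Suc m)"
  obtains c v where "c \<in> PP m" "v \<le> 2" "\<not> (v = 0 \<and> armed m c)" "c' = c(Suc m := v)"
proof -
  have xc: "c' \<in> configs (Suc m)" using c' by (auto simp: PP_def)
  let ?c = "c'(Suc m := 0)" and ?v = "c' (Suc m)"
  have d: "?c \<in> configs m" "c' = ?c(Suc m := ?v)" by (rule decomp_fun[OF xc])+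
  then have "?c \<in> PP m \<and> ?v \<le> 2 \<and> \<not> (?v = 0 \<and> armed m ?c)" using E5[OF m1 d(1), of ?v] c' by auto
  then show ?thesis using that d(2) by blast
qed

lemma PP_bounds:
  "1 \<le> m \<Longrightarrow> c \<in> PP m \<Longrightarrow> tot m c + 1 \<le> 2 * m \<and> m \<le> tot m c + 1 \<and> (\<not> armed m c \<longrightarrow> m \<le> tot m c)"
proof (induction m arbitrary: c rule: dec_induct)
  case base
  then have c1: "c 1 \<le> 1" by (auto simp: PP_def)
  have t: "tot 1 c = c 1" by (simp add: tot_def)
  have "\<not> armed 1 c \<longrightarrow> c 1 \<noteq> 0" unfolding armed_def by (intro impI) auto
  then show ?case using c1 t by auto
next
  case (step m)
  have m1: "1 \<le> m" using step.hyps by simp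
  obtain c0 v where h: "c0 \<in> PP m" "v \<le> 2" "\<not> (v = 0 \<and> armed m c0)" "c = c0(Suc m := v)"
    using PP_decomp[OF m1 step.prems] by blast
  have IH: "tot m c0 + 1 \<le> 2 * m" "m \<le> tot m c0 + 1" "\<not> armed m c0 \<longrightarrow> m \<le> tot m c0"
    using step.IH[OF h(1)] by auto
  have t: "tot (Suc m) c = tot m c0 + v" using E4[OF m1] h(4) by simp
  have a: "armed (Suc m) c \<longleftrightarrow> v = 0 \<or> (v \<noteq> 2 \<and> armed m c0)" using E3[OF m1] h(4) by simp
  show ?case
  proof (intro conjI impI)
    show "tot (Suc m) c + 1 \<le> 2 * Suc m" using t IH h(2) by simp
    show "Suc m \<le> tot (Suc m) c + 1" using t IH h(2,3) by (cases "v = 0") auto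
    assume "\<not> armed (Suc m) c"
    then have "v \<noteq> 0" "v = 2 \<or> \<not> armed m c0" using a by auto
    then show "Suc m \<le> tot (Suc m) c" using t IH by auto
  qed
qed

definition UU :: "real \<Rightarrow> nat \<Rightarrow> real" where
  "UU y m = (\<Sum>c\<in>{c\<in>PP m. \<not> armed m c}. y ^ (tot m c - m))"
definition VV :: "real \<Rightarrow> nat \<Rightarrow> real" where
  "VV y m = (\<Sum>c\<in>{c\<in>PP m. armed m c}. y ^ (tot m c + 1 - m))"

lemma sum3: "(\<Sum>v\<in>{0,1,2::nat}. (g v :: real)) = g 0 + g 1 + g 2"
  by (simp add: add.assoc)

lemma split_PP:
  assumes m1: "1 \<le> m"
  shows "(\<Sum>c\<in>PP m. y ^ (tot m c + 1 - m)) = y * UU y m + VV y m"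
proof -
  have fin: "finite {c\<in>PP m. \<not> armed m c}" "finite {c\<in>PP m. armed m c}"
    using finite_PP by auto
  have "PP m = {c\<in>PP m. \<not> armed m c} \<union> {c\<in>PP m. armed m c}" by auto
  then have "(\<Sum>c\<in>PP m. y ^ (tot m c + 1 - m)) =
     (\<Sum>c\<in>{c\<in>PP m. \<not> armed m c}. y ^ (tot m c + 1 - m)) + (\<Sum>c\<in>{c\<in>PP m. armed m c}. y ^ (tot m c + 1 - m))"
    using sum.union_disjoint[OF fin] by (metis (no_types, lifting) disjoint_iff mem_Collect_eq)
  also have "(\<Sum>c\<in>{c\<in>PP m. \<not> armed m c}. y ^ (tot m c + 1 - m)) = y * UU y m"
  proof -
    have "(\<Sum>c\<in>{c\<in>PP m. \<not> armed m c}. y ^ (tot m c + 1 - m)) = (\<Sum>c\<in>{c\<in>PP m. \<not> armed m c}. y * y ^ (tot m c - m))"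
    proof (rule sum.cong[OF refl])
      fix c assume "c \<in> {c\<in>PP m. \<not> armed m c}"
      then have "m \<le> tot m c" using PP_bounds[OF m1] by auto
      then have "tot m c + 1 - m = Suc (tot m c - m)" by simp
      then show "y ^ (tot m c + 1 - m) = y * y ^ (tot m c - m)" by simp
    qed
    then show ?thesis by (simp add: UU_def sum_distrib_left)
  qed
  finally show ?thesis by (simp add: VV_def)
qed

lemma UU_Suc:
  assumes m1: "1 \<le> m"
  shows "UU y (Suc m) = (1 + y) * UU y m + VV y m"
proof -
  let ?f = "\<lambda>c'. y ^ (tot (Suc m) c' - Suc m)"
  have "UU y (Suc m) = (\<Sum>v\<in>{0,1,2::nat}. \<Sum>c\<in>{c\<in>PP m. \<not> (v = 0 \<and> armed m c) \<and> \<not> armed (Suc m) (c(Suc m := v))}. ?f (c(Suc m := v)))"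
    unfolding UU_def by (rule PP_Suc_sum[OF m1])
  also have "\<dots> = (\<Sum>c\<in>{c\<in>PP m. \<not> armed m c}. y ^ (tot m c - m)) + (\<Sum>c\<in>PP m. y ^ (tot m c + 1 - m))"
  proof -
    have s0: "{c\<in>PP m. \<not> (0 = 0 \<and> armed m c) \<and> \<not> armed (Suc m) (c(Suc m := 0))} = {}"
      using E3[OF m1] by auto
    have s1: "{c\<in>PP m. \<not> ((1::nat) = 0 \<and> armed m c) \<and> \<not> armed (Suc m) (c(Suc m := 1))} = {c\<in>PP m. \<not> armed m c}"
      using E3[OF m1] by auto
    have s2: "{c\<in>PP m. \<not> ((2::nat) = 0 \<and> armed m c) \<and> \<not> armed (Suc m) (c(Suc m := 2))} = PP m"
      using E3[OF m1] by auto
    have f1: "?f (c(Suc m := 1)) = y ^ (tot m c - m)" for c using E4[OF m1] by simp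
    have f2: "?f (c(Suc m := 2)) = y ^ (tot m c + 1 - m)" for c using E4[OF m1] by simp
    show ?thesis unfolding sum3 s0 s1 s2 f1 f2 by simp
  qed
  also have "\<dots> = (1 + y) * UU y m + VV y m"
    unfolding split_PP[OF m1] UU_def by (simp add: algebra_simps)
  finally show ?thesis .
qed

lemma VV_Suc:
  assumes m1: "1 \<le> m"
  shows "VV y (Suc m) = UU y m + VV y m"
proof -
  let ?f = "\<lambda>c'. y ^ (tot (Suc m) c' + 1 - Suc m)"
  have "VV y (Suc m) = (\<Sum>v\<in>{0,1,2::nat}. \<Sum>c\<in>{c\<in>PP m. \<not> (v = 0 \<and> armed m c) \<and> armed (Suc m) (c(Suc m := v))}. ?f (c(Suc m := v)))"
    unfolding VV_def by (rule PP_Suc_sum[OF m1])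
  also have "\<dots> = UU y m + VV y m"
  proof -
    have s0: "{c\<in>PP m. \<not> (0 = 0 \<and> armed m c) \<and> armed (Suc m) (c(Suc m := 0))} = {c\<in>PP m. \<not> armed m c}"
      using E3[OF m1] by auto
    have s1: "{c\<in>PP m. \<not> ((1::nat) = 0 \<and> armed m c) \<and> armed (Suc m) (c(Suc m := 1))} = {c\<in>PP m. armed m c}"
      using E3[OF m1] by auto
    have s2: "{c\<in>PP m. \<not> ((2::nat) = 0 \<and> armed m c) \<and> armed (Suc m) (c(Suc m := 2))} = {}"
      using E3[OF m1] by auto
    have f0: "?f (c(Suc m := 0)) = y ^ (tot m c - m)" for c using E4[OF m1] by simp
    have f1: "?f (c(Suc m := 1)) = y ^ (tot m c + 1 - m)" for c using E4[OF m1] by simp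
    show ?thesis unfolding sum3 s0 s1 s2 f0 f1 UU_def VV_def by simp
  qed
  finally show ?thesis .
qed

lemma PP_1: "c \<in> PP 1 \<longleftrightarrow> c = (\<lambda>j. 0) \<or> c = (\<lambda>j. if j = 1 then 1 else 0)"
proof
  assume c: "c \<in> PP 1"
  then have c1: "c 1 \<le> 1" and z: "\<And>j. j \<noteq> 1 \<Longrightarrow> c j = 0" by (auto simp: PP_def configs_def)
  show "c = (\<lambda>j. 0) \<or> c = (\<lambda>j. if j = 1 then 1 else 0)"
  proof (cases "c 1 = 0")
    case True
    then have "c = (\<lambda>j. 0)" using z by (intro ext) (metis)
    then show ?thesis by simp
  next
    case False
    then have "c 1 = 1" using c1 by simp
    then have "c = (\<lambda>j. if j = 1 then 1 else 0)" using z by (intro ext) auto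
    then show ?thesis by simp
  qed
next
  assume "c = (\<lambda>j. 0) \<or> c = (\<lambda>j. if j = 1 then 1 else 0)"
  then show "c \<in> PP 1" by (auto simp: PP_def configs_def bad_def)
qed

lemma armed_1: "armed 1 c \<longleftrightarrow> c 1 = 0"
  unfolding armed_def by auto

lemma UV_1: "UU y 1 = 1" "VV y 1 = 1"
proof -
  have a: "{c\<in>PP 1. \<not> armed 1 c} = {(\<lambda>j. if j = 1 then 1 else 0)}"
    using PP_1 armed_1 by auto
  have b: "{c\<in>PP 1. armed 1 c} = {(\<lambda>j. 0)}"
    using PP_1 armed_1 by auto
  show "UU y 1 = 1" unfolding UU_def a by (simp add: tot_def)
  show "VV y 1 = 1" unfolding VV_def b by (simp add: tot_def)
qed

lemma UU_XX_Suc: "UU y (Suc m) = XX y (Suc m) \<and> VV y (Suc m) = YY y (Suc m)"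
proof (induction m)
  case 0 then show ?case using UV_1 by (simp add: XX_Suc YY_Suc)
next
  case (Suc m)
  then show ?case by (simp add: UU_Suc VV_Suc XX_Suc[of y "Suc m"] YY_Suc[of y "Suc m"])
qed

lemma UU_XX: "1 \<le> m \<Longrightarrow> UU y m = XX y m"
  using UU_XX_Suc[of y "m - 1"] by simp

lemma rec_GF:
  assumes m1: "1 \<le> m"
  shows "(\<Sum>c\<in>{c\<in>PP (Suc m). c (Suc m) \<le> 1}. y ^ (tot (Suc m) c + 1 - Suc m)) = XX y (Suc m)"
proof -
  let ?f = "\<lambda>c'. y ^ (tot (Suc m) c' + 1 - Suc m)"
  have "(\<Sum>c\<in>{c\<in>PP (Suc m). c (Suc m) \<le> 1}. ?f c) =
     (\<Sum>v\<in>{0,1,2::nat}. \<Sum>c\<in>{c\<in>PP m. \<not> (v = 0 \<and> armed m c) \<and> (c(Suc m := v)) (Suc m) \<le> 1}. ?f (c(Suc m := v)))"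
    by (rule PP_Suc_sum[OF m1])
  also have "\<dots> = UU y m + (y * UU y m + VV y m)"
  proof -
    have s0: "{c\<in>PP m. \<not> (0 = 0 \<and> armed m c) \<and> (c(Suc m := 0)) (Suc m) \<le> 1} = {c\<in>PP m. \<not> armed m c}"
      by auto
    have s1: "{c\<in>PP m. \<not> ((1::nat) = 0 \<and> armed m c) \<and> (c(Suc m := 1)) (Suc m) \<le> 1} = PP m"
      by auto
    have s2: "{c\<in>PP m. \<not> ((2::nat) = 0 \<and> armed m c) \<and> (c(Suc m := 2)) (Suc m) \<le> 1} = {}"
      by auto
    have f0: "?f (c(Suc m := 0)) = y ^ (tot m c - m)" for c using E4[OF m1] by simp
    have f1: "?f (c(Suc m := 1)) = y ^ (tot m c + 1 - m)" for c using E4[OF m1] by simp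
    show ?thesis unfolding sum3 s0 s1 s2 f0 f1 split_PP[OF m1] UU_def by simp
  qed
  also have "\<dots> = UU y (Suc m)" using UU_Suc[OF m1] by (simp add: algebra_simps)
  also have "\<dots> = XX y (Suc m)" using UU_XX by simp
  finally show ?thesis .
qed


lemma spokes_eq: "{{0, i} | i. 1 \<le> i \<and> i \<le> n} = (\<lambda>i. {0, i}) ` {1..n}"
  by auto

lemma card_spokes: "card {{0, i} | i. 1 \<le> i \<and> i \<le> (n::nat)} = n"
proof -
  have "inj_on (\<lambda>i. {0::nat, i}) {1..n}" by (intro inj_onI) (auto simp: doubleton_eq_iff)
  then show ?thesis unfolding spokes_eq by (simp add: card_image)
qed

lemma card_Pn_edges: "card (Pn_edges n) = n - 1"
proof -
  have "inj_on (\<lambda>i. {i, i + 1}) {1..<n}" by (intro inj_onI) (auto simp: doubleton_eq_iff)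
  then show ?thesis unfolding Pn_edges_img by (simp add: card_image)
qed

lemma card_Fn_edges: "1 \<le> n \<Longrightarrow> card (Fn_edges n) = 2 * n - 1"
proof -
  assume n1: "1 \<le> n"
  have disj: "Pn_edges n \<inter> {{0, i} | i. 1 \<le> i \<and> i \<le> n} = {}"
    using Pn_edges_sub by fastforce
  have fin: "finite {{0, i} | i. 1 \<le> i \<and> i \<le> (n::nat)}" unfolding spokes_eq by simp
  have "card (Fn_edges n) = card (Pn_edges n) + card {{0, i} | i. 1 \<le> i \<and> i \<le> n}"
    unfolding Fn_edges_def by (rule card_Un_disjoint[OF _ fin disj]) simp
  then show ?thesis using card_Pn_edges card_spokes n1 by simp
qed

lemma deg0: "Fn_deg n 0 = n"
proof -
  have "{e \<in> Fn_edges n. 0 \<in> e} = {{0, i} | i. 1 \<le> i \<and> i \<le> n}"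
    using Pn_edges_sub by (fastforce simp: Fn_edges_def)
  then show ?thesis using card_spokes by (simp add: Fn_deg_def)
qed

lemma level_eq: "1 \<le> n \<Longrightarrow> level n c = int (tot n c) + 1 - int n"
  unfolding level_def deg0 card_Fn_edges tot_def by simp

definition Rec :: "nat \<Rightarrow> (nat \<Rightarrow> nat) set" where
  "Rec n = {c. ASM_recurrent n c}"

lemma Rec_eq: "2 \<le> n \<Longrightarrow> Rec n = {c\<in>PP n. c n \<le> 1}"
  unfolding Rec_def using recurrent_iff_good good_iff_PP by blast

lemma finite_Rec: "2 \<le> n \<Longrightarrow> finite (Rec n)"
  using Rec_eq finite_PP by auto

lemma Rec_bounds:
  assumes n2: "2 \<le> n" and c: "c \<in> Rec n"
  shows "n \<le> tot n c + 1" "tot n c + 1 - n \<le> n - 1"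
proof -
  obtain m where m: "n = Suc m" "1 \<le> m" using n2 by (metis Suc_le_D Suc_le_mono one_add_one plus_1_eq_Suc)
  have cP: "c \<in> PP (Suc m)" "c (Suc m) \<le> 1" using c Rec_eq[OF n2] m by auto
  then show "n \<le> tot n c + 1" using PP_bounds[of "Suc m" c] m by auto
  obtain c0 v where h: "c0 \<in> PP m" "v \<le> 2" "\<not> (v = 0 \<and> armed m c0)" "c = c0(Suc m := v)"
    using PP_decomp[OF m(2) cP(1)] by blast
  have "v \<le> 1" using h(4) cP(2) by simp
  moreover have "tot n c = tot m c0 + v" using E4[OF m(2)] h(4) m(1) by simp
  moreover have "tot m c0 + 1 \<le> 2 * m" using PP_bounds[OF m(2) h(1)] by simp
  ultimately show "tot n c + 1 - n \<le> n - 1" using m by simp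
qed

lemma Rec_GF:
  assumes n2: "2 \<le> n"
  shows "XX y n = (\<Sum>j\<le>n - 1. real (card {c. ASM_recurrent n c \<and> level n c = int j}) * y ^ j)"
proof -
  obtain m where m: "n = Suc m" "1 \<le> m" using n2 by (metis Suc_le_D Suc_le_mono one_add_one plus_1_eq_Suc)
  let ?g = "\<lambda>c. tot n c + 1 - n"
  have "XX y n = (\<Sum>c\<in>Rec n. y ^ ?g c)"
    using rec_GF[OF m(2), of y] Rec_eq[OF n2] m(1) by simp
  also have "\<dots> = (\<Sum>j\<le>n-1. \<Sum>c\<in>{c \<in> Rec n. ?g c = j}. y ^ ?g c)"
    by (rule sum.group[symmetric]) (use finite_Rec[OF n2] Rec_bounds[OF n2] in auto)
  also have "\<dots> = (\<Sum>j\<le>n - 1. real (card {c. ASM_recurrent n c \<and> level n c = int j}) * y ^ j)"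
  proof (rule sum.cong[OF refl])
    fix j assume "j \<in> {..n-1}"
    have eq: "{c \<in> Rec n. ?g c = j} = {c. ASM_recurrent n c \<and> level n c = int j}"
    proof (intro equalityI subsetI)
      fix c assume "c \<in> {c \<in> Rec n. ?g c = j}"
      then have c: "c \<in> Rec n" "?g c = j" by auto
      have "n \<le> tot n c + 1" using Rec_bounds[OF n2 c(1)] by simp
      then have "level n c = int j" using level_eq[of n c] n2 c(2) by simp
      then show "c \<in> {c. ASM_recurrent n c \<and> level n c = int j}" using c(1) by (simp add: Rec_def)
    next
      fix c assume "c \<in> {c. ASM_recurrent n c \<and> level n c = int j}"
      then have c: "c \<in> Rec n" "level n c = int j" by (auto simp: Rec_def)
      have "n \<le> tot n c + 1" using Rec_bounds[OF n2 c(1)] by simp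
      then have "?g c = j" using level_eq[of n c] n2 c(2) by simp
      then show "c \<in> {c \<in> Rec n. ?g c = j}" using c(1) by simp
    qed
    have "(\<Sum>c\<in>{c \<in> Rec n. ?g c = j}. y ^ ?g c) = (\<Sum>c\<in>{c \<in> Rec n. ?g c = j}. y ^ j)"
      by (rule sum.cong) auto
    also have "\<dots> = real (card {c \<in> Rec n. ?g c = j}) * y ^ j" by simp
    finally show "(\<Sum>c\<in>{c \<in> Rec n. ?g c = j}. y ^ ?g c) = real (card {c. ASM_recurrent n c \<and> level n c = int j}) * y ^ j"
      unfolding eq .
  qed
  finally show ?thesis .
qed

lemma finite_Kimb: "finite (Kimb i j)"
proof -
  have "Kimb i j \<subseteq> KP (i + j)" by (auto simp: Kimb_def KP_def)
  then show ?thesis using finite_KP by (rule finite_subset)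
qed

theorem mainTheorem19:
  fixes n k :: nat
  assumes "2 \<le> n" and "k \<le> n - 1"
  shows "(\<exists>f. bij_betw f {c. ASM_recurrent n c \<and> level n c = int k}
                         {(V, E) \<in> subgraphs_Pn n. n \<in> V \<and> card E = k})
       \<and> (\<exists>g. bij_betw g {(V, E) \<in> subgraphs_Pn n. n \<in> V \<and> card E = k}
                         (Kimb (n - k) k))
       \<and> (\<forall>y::real. tutte (Fn_vertices n) (Fn_edges n) 1 y =
             (\<Sum>j=0..n-1. real (card (Kimb (n - j) j)) * y ^ j))
       \<and> (\<forall>j\<le>n-1. card (Kimb (n - j) j) =
             (\<Sum>r=0..n-j-1. ((n - j - 1) choose r) * ((r + j) choose r)))"
proof -
  have n2: "2 \<le> n" and n1: "1 \<le> n" using assms by auto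
  let ?A = "\<lambda>j. real (card {c. ASM_recurrent n c \<and> level n c = int j})"
  let ?B = "\<lambda>j. real (card {(V, E) \<in> subgraphs_Pn n. n \<in> V \<and> card E = j})"
  let ?C = "\<lambda>j. real (card (Kimb (n - j) j))"
  have AB: "\<forall>y::real. (\<Sum>j\<le>n-1. ?A j * y ^ j) = (\<Sum>j\<le>n-1. ?B j * y ^ j)"
    using Rec_GF[OF n2] GG_coeffs[OF n1] GG_XX by metis
  have BC: "\<forall>y::real. (\<Sum>j\<le>n-1. ?B j * y ^ j) = (\<Sum>j\<le>n-1. ?C j * y ^ j)"
    using kap_coeffs[OF n1] GG_coeffs[OF n1] GG_XX kap_XX[OF n1] by metis
  have cAB: "?A k = ?B k" using AB assms(2) unfolding polyfun_eq_coeffs by blast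
  have cBC: "?B k = ?C k" using BC assms(2) unfolding polyfun_eq_coeffs by blast
  have finA: "finite {c. ASM_recurrent n c \<and> level n c = int k}"
    using finite_Rec[OF n2] by (rule finite_subset[rotated]) (auto simp: Rec_def)
  have finB: "finite {(V, E) \<in> subgraphs_Pn n. n \<in> V \<and> card E = k}"
    by (rule finite_subset[OF _ finite_sg[of n]]) (auto simp: sg_def subgraphs_Pn_def)
  have finC: "finite (Kimb (n - k) k)" by (rule finite_Kimb)
  have P1: "\<exists>f. bij_betw f {c. ASM_recurrent n c \<and> level n c = int k}
                         {(V, E) \<in> subgraphs_Pn n. n \<in> V \<and> card E = k}"
    using finite_same_card_bij[OF finA finB] cAB by simp
  have P2: "\<exists>g. bij_betw g {(V, E) \<in> subgraphs_Pn n. n \<in> V \<and> card E = k} (Kimb (n - k) k)"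
    using finite_same_card_bij[OF finB finC] cBC by simp
  have P3: "\<forall>y::real. tutte (Fn_vertices n) (Fn_edges n) 1 y =
             (\<Sum>j=0..n-1. real (card (Kimb (n - j) j)) * y ^ j)"
  proof
    fix y :: real
    have "tutte (Fn_vertices n) (Fn_edges n) 1 y = XX y n" using tutte_TX[OF n1] TX_XX[OF n1] by simp
    also have "\<dots> = kap y n" using kap_XX[OF n1] by simp
    also have "\<dots> = (\<Sum>j\<le>n - 1. real (card (Kimb (n - j) j)) * y ^ j)" by (rule kap_coeffs[OF n1])
    also have "\<dots> = (\<Sum>j=0..n-1. real (card (Kimb (n - j) j)) * y ^ j)" by (simp add: atLeast0AtMost)
    finally show "tutte (Fn_vertices n) (Fn_edges n) 1 y = (\<Sum>j=0..n-1. real (card (Kimb (n - j) j)) * y ^ j)" .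
  qed
  have P4: "\<forall>j\<le>n-1. card (Kimb (n - j) j) =
             (\<Sum>r=0..n-j-1. ((n - j - 1) choose r) * ((r + j) choose r))"
  proof (intro allI impI)
    fix j assume "j \<le> n - 1"
    then have "1 \<le> n - j" using n1 by simp
    then show "card (Kimb (n - j) j) = (\<Sum>r=0..n-j-1. ((n - j - 1) choose r) * ((r + j) choose r))"
      using card_Kimb[of "n - j" j] by simp
  qed
  show ?thesis using P1 P2 P3 P4 by blast
qed


end
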